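(* Let $p$ be an odd prime with $3 \mid (p-1)$. Then there exists an MDS $(3p,\,12)_{p}$ symbol-pair code, i.e., a code $\mathcal{C}\subseteq \mathbb{F}_p^{3p}$ with minimum symbol-pair distance $d_p(\mathcal{C})=12$ and $|\mathcal{C}| = p^{3p-12+2}$.
   Context: For a vector $\mathbf{x}=(x_0,\dots,x_{n-1})\in\mathbb{F}_q^n$ (indices taken modulo $n$), the symbol-pair distance between $\mathbf{x},\mathbf{y}\in\mathbb{F}_q^n$ is $d_p(\mathbf{x},\mathbf{y})=|\{i\in\mathbb{Z}_n : (x_i,x_{i+1})\neq(y_i,y_{i+1})\}|$. The minimum symbol-pair distance of a code $\mathcal{C}\subseteq\mathbb{F}_q^n$ is $d_p(\mathcal{C})=\min\{d_p(\mathbf{x},\mathbf{y}) : \mathbf{x},\mathbf{y}\in\mathcal{C},\ \mathbf{x}\neq\mathbf{y}\}$. Any code of length $n$ over $\mathbb{F}_q$ with minimum symbol-pair distance $d_p$ (where $2\le d_p\le n$) satisfies the Singleton-type bound $|\mathcal{C}|\le q^{n-d_p+2}$; a code attaining equality is called an MDS symbol-pair code. An $(n,d_p)_q$ symbol-pair code is a code of length $n$ over $\mathbb{F}_q$ with minimum symbol-pair distance $d_p$. *)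

theory Defs
  imports Main "HOL-Computational_Algebra.Primes"
begin

text \<open>Vectors in F_q^n are lists of length n over {0..<q} (the elements of Z/qZ = F_q for q prime).
Indices are taken modulo n.\<close>

definition vecs :: "nat \<Rightarrow> nat \<Rightarrow> nat list set" where
  "vecs q n = {xs. length xs = n \<and> set xs \<subseteq> {0..<q}}"

definition pair_dist :: "nat list \<Rightarrow> nat list \<Rightarrow> nat" where
  "pair_dist x y = (let n = length x in
     card {i \<in> {0..<n}. (x ! i, x ! ((i + 1) mod n)) \<noteq> (y ! i, y ! ((i + 1) mod n))})"

definition min_pair_dist :: "nat list set \<Rightarrow> nat" where
  "min_pair_dist C = Min {pair_dist x y | x y. x \<in> C \<and> y \<in> C \<and> x \<noteq> y}"

end

theory Submission
  imports Defs "HOL-Number_Theory.Number_Theory"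
begin


definition mom :: "nat \<Rightarrow> nat \<Rightarrow> (nat \<Rightarrow> int) \<Rightarrow> int" where
  "mom p j f = (\<Sum>r<p. f r * int r ^ j)"

definition Hm :: "nat \<Rightarrow> nat \<Rightarrow> (nat \<Rightarrow> int) \<Rightarrow> bool" where
  "Hm p m f = (\<forall>j<m. int p dvd mom p j f)"

definition supp :: "nat \<Rightarrow> (nat \<Rightarrow> int) \<Rightarrow> nat set" where
  "supp p f = {r. r < p \<and> \<not> int p dvd f r}"

lemma dvd_eqI: "(p::int) dvd a \<Longrightarrow> b = a \<Longrightarrow> p dvd b" by simp

lemma Gsum:
  fixes L :: "nat set"
  assumes "finite L" "Hm p m f"
  shows "j + card L \<le> m + 1 \<Longrightarrow> int p dvd ((\<Sum>r<p. f r * int r ^ j * (\<Prod>c\<in>L. int r - int c)) -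
     (if j + card L < m then 0 else if j + card L = m then mom p m f
      else mom p (Suc m) f - (\<Sum>c\<in>L. int c) * mom p m f))"
  using assms(1)
proof (induction L arbitrary: j rule: finite_induct)
  case empty
  show ?case
  proof (cases "j < m")
    case True then show ?thesis using assms(2) by (simp add: Hm_def mom_def)
  next
    case False
    then have "j = m \<or> j = Suc m" using empty by auto
    then show ?thesis by (auto simp: mom_def)
  qed
next
  case (insert c L)
  define S where "S = (\<lambda>j. (\<Sum>r<p. f r * int r ^ j * (\<Prod>c\<in>L. int r - int c)))"
  have split: "(\<Sum>r<p. f r * int r ^ j * (\<Prod>c\<in>insert c L. int r - int c)) = S (Suc j) - int c * S j"
    unfolding S_def using insert(1,2)
    by (simp add: sum_distrib_left sum_subtractf[symmetric] algebra_simps)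
  have cL: "card (insert c L) = Suc (card L)" using insert(1,2) by simp
  have IH1: "int p dvd S (Suc j) -
     (if Suc j + card L < m then 0 else if Suc j + card L = m then mom p m f
      else mom p (Suc m) f - (\<Sum>c\<in>L. int c) * mom p m f)"
    using insert.IH[of "Suc j"] insert.prems cL unfolding S_def by simp
  have IH0: "int p dvd S j -
     (if j + card L < m then 0 else if j + card L = m then mom p m f
      else mom p (Suc m) f - (\<Sum>c\<in>L. int c) * mom p m f)"
    using insert.IH[of j] insert.prems cL unfolding S_def by simp
  have sL: "(\<Sum>c\<in>insert c L. int c) = int c + (\<Sum>c\<in>L. int c)" using insert(1,2) by simp
  consider "Suc j + card L < m" | "Suc j + card L = m" | "Suc j + card L = Suc m"
    using insert.prems cL by linarith
  then show ?case
  proof cases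
    case 1
    then have a: "int p dvd S (Suc j)" and b: "int p dvd S j" using IH1 IH0 by auto
    show ?thesis using 1 cL split dvd_diff[OF a dvd_mult[OF b, of "int c"]] by simp
  next
    case 2
    then have a: "int p dvd S (Suc j) - mom p m f" and b: "int p dvd S j" using IH1 IH0 by auto
    have "S (Suc j) - int c * S j - mom p m f = (S (Suc j) - mom p m f) - int c * S j" by simp
    moreover have "int p dvd (S (Suc j) - mom p m f) - int c * S j"
      using dvd_diff[OF a dvd_mult[OF b, of "int c"]] by simp
    ultimately have "int p dvd S (Suc j) - int c * S j - mom p m f" by metis
    then show ?thesis using 2 cL split by simp
  next
    case 3
    then have a: "int p dvd S (Suc j) - (mom p (Suc m) f - (\<Sum>c\<in>L. int c) * mom p m f)"
      and b: "int p dvd S j - mom p m f" using IH1 IH0 by auto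
    have "int p dvd S (Suc j) - int c * S j - (mom p (Suc m) f - (\<Sum>c\<in>insert c L. int c) * mom p m f)"
      by (rule dvd_eqI[OF dvd_diff[OF a dvd_mult[OF b, of "int c"]]]) (simp add: sL algebra_simps)
    then show ?thesis using 3 cL split by simp
  qed
qed

lemma dvd_diff_lt_eq:
  assumes "int p dvd int t - int c" "t < p" "c < p"
  shows "t = c"
proof (rule ccontr)
  assume "t \<noteq> c"
  then have "int t - int c \<noteq> 0" by simp
  from dvd_imp_le_int[OF this assms(1)] assms(2,3) show False by linarith
qed

lemma prod_nonzero:
  assumes "prime p" "t < p" "finite L" "L \<subseteq> {..<p}" "t \<notin> L"
  shows "\<not> int p dvd (\<Prod>c\<in>L. int t - int c)"
proof
  assume d: "int p dvd (\<Prod>c\<in>L. int t - int c)"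
  have pr: "prime (int p)" using assms(1) by simp
  have "\<exists>c\<in>L. int p dvd int t - int c"
    using prime_dvd_prod_iff[OF assms(3) pr] d by simp
  then obtain c where c: "c \<in> L" "int p dvd int t - int c" by blast
  have "c < p" using c(1) assms(4) by auto
  then have "t = c" using dvd_diff_lt_eq[OF c(2) assms(2)] by simp
  then show False using c(1) assms(5) by simp
qed

lemma sum_single:
  assumes "t < p" "\<forall>r<p. r \<noteq> t \<longrightarrow> int p dvd f r \<or> r \<in> L" "finite L"
  shows "int p dvd (\<Sum>r<p. f r * (\<Prod>c\<in>L. int r - int c)) - f t * (\<Prod>c\<in>L. int t - int c)"
proof -
  have "(\<Sum>r<p. f r * (\<Prod>c\<in>L. int r - int c)) = f t * (\<Prod>c\<in>L. int t - int c) +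
     (\<Sum>r\<in>{..<p} - {t}. f r * (\<Prod>c\<in>L. int r - int c))"
    using assms(1) by (simp add: sum.remove)
  moreover have "int p dvd (\<Sum>r\<in>{..<p} - {t}. f r * (\<Prod>c\<in>L. int r - int c))"
  proof (rule dvd_sum)
    fix r assume r: "r \<in> {..<p} - {t}"
    then have "int p dvd f r \<or> r \<in> L" using assms(2) by auto
    then show "int p dvd f r * (\<Prod>c\<in>L. int r - int c)"
    proof
      assume "r \<in> L"
      then have "(\<Prod>c\<in>L. int r - int c) = 0" using assms(3) by (intro prod_zero) auto
      then show ?thesis by simp
    qed simp
  qed
  ultimately show ?thesis by simp
qed

lemma sum_zero:
  assumes "\<forall>r<p. int p dvd f r \<or> r \<in> L" "finite L"
  shows "int p dvd (\<Sum>r<p. f r * (\<Prod>c\<in>L. int r - int c))"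
proof (rule dvd_sum)
  fix r assume r: "r \<in> {..<p}"
  then have "int p dvd f r \<or> r \<in> L" using assms(1) by auto
  then show "int p dvd f r * (\<Prod>c\<in>L. int r - int c)"
  proof
    assume "r \<in> L"
    then have "(\<Prod>c\<in>L. int r - int c) = 0" using assms(2) by (intro prod_zero) auto
    then show ?thesis by simp
  qed simp
qed

lemma supp_sub: "supp p f \<subseteq> {..<p}" "finite (supp p f)"
  unfolding supp_def by auto

lemma MDS:
  assumes "prime p" "Hm p m f" "t < p" "\<not> int p dvd f t"
  shows "m + 1 \<le> card (supp p f)"
proof (rule ccontr)
  assume "\<not> m + 1 \<le> card (supp p f)"
  define K where "K = supp p f"
  define L where "L = K - {t}"
  have tK: "t \<in> K" using assms(3,4) by (simp add: K_def supp_def)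
  have fK: "finite K" "K \<subseteq> {..<p}" using supp_sub K_def by auto
  have "card K > 0" using tK fK by (auto simp: card_gt_0_iff)
  then have cL: "card L < m" using \<open>\<not> m + 1 \<le> card (supp p f)\<close> tK fK
    unfolding L_def K_def[symmetric] by (simp add: card_Diff_singleton)
  have fL: "finite L" using fK L_def by simp
  have g: "int p dvd (\<Sum>r<p. f r * (\<Prod>c\<in>L. int r - int c))"
    using Gsum[OF fL assms(2), of 0] cL by simp
  have "\<forall>r<p. r \<noteq> t \<longrightarrow> int p dvd f r \<or> r \<in> L"
    unfolding L_def K_def supp_def by auto
  from dvd_diff[OF g sum_single[OF assms(3) this fL]] have "int p dvd f t * (\<Prod>c\<in>L. int t - int c)"
    by simp
  moreover have "\<not> int p dvd (\<Prod>c\<in>L. int t - int c)"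
    using prod_nonzero[OF assms(1,3) fL] fK L_def by auto
  moreover have "prime (int p)" using assms(1) by simp
  ultimately show False using assms(4) prime_dvd_mult_iff by blast
qed

lemma Lagr:
  assumes "Hm p m f" "finite K" "card K = m + 1" "\<forall>r<p. r \<notin> K \<longrightarrow> int p dvd f r" "t \<in> K" "t < p"
  shows "int p dvd f t * (\<Prod>c\<in>K - {t}. int t - int c) - mom p m f"
proof -
  define L where "L = K - {t}"
  have fL: "finite L" and cL: "card L = m" using assms L_def by auto
  have g: "int p dvd (\<Sum>r<p. f r * (\<Prod>c\<in>L. int r - int c)) - mom p m f"
    using Gsum[OF fL assms(1), of 0] cL by simp
  have "\<forall>r<p. r \<noteq> t \<longrightarrow> int p dvd f r \<or> r \<in> L"
    using assms(4) unfolding L_def by auto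
  from dvd_diff[OF g sum_single[OF assms(6) this fL]] show ?thesis unfolding L_def
    by (rule dvd_eqI) simp
qed

lemma Symm:
  assumes "Hm p m f" "finite K" "card K = m + 1" "\<forall>r<p. r \<notin> K \<longrightarrow> int p dvd f r"
  shows "int p dvd mom p (Suc m) f - (\<Sum>c\<in>K. int c) * mom p m f"
proof -
  have g: "int p dvd (\<Sum>r<p. f r * (\<Prod>c\<in>K. int r - int c)) - (mom p (Suc m) f - (\<Sum>c\<in>K. int c) * mom p m f)"
    using Gsum[OF assms(2,1), of 0] assms(3) by simp
  have "int p dvd (\<Sum>r<p. f r * (\<Prod>c\<in>K. int r - int c))"
    using sum_zero[of p f K] assms(2,4) by blast
  from dvd_diff[OF this g] show ?thesis by simp
qed




definition sh :: "nat \<Rightarrow> nat \<Rightarrow> (nat \<Rightarrow> int) \<Rightarrow> nat \<Rightarrow> int" where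
  "sh p k f = (\<lambda>r. f ((r + k) mod p))"

lemma mom_sh:
  assumes "0 < p" "k \<le> p" "int p dvd (\<kappa> + int k)"
  shows "int p dvd mom p j (sh p k f) - (\<Sum>s<p. f s * (int s + \<kappa>) ^ j)"
proof -
  define g where "g = (\<lambda>r. (r + k) mod p)"
  define h where "h = (\<lambda>s. (s + (p - k)) mod p)"
  have hg: "h (g r) = r" if "r < p" for r
  proof -
    have "h (g r) = ((r + k) mod p + (p - k)) mod p" by (simp add: g_def h_def)
    also have "\<dots> = (r + k + (p - k)) mod p" by (simp add: mod_add_left_eq)
    also have "\<dots> = (r + p) mod p" using assms(2) by simp
    also have "\<dots> = r" using that by simp
    finally show ?thesis .
  qed
  have inj: "inj_on g {..<p}" by (rule inj_on_inverseI[where g = h]) (simp add: hg)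
  have img: "g ` {..<p} = {..<p}"
  proof
    show "g ` {..<p} \<subseteq> {..<p}" using assms(1) by (auto simp: g_def)
    show "{..<p} \<subseteq> g ` {..<p}"
    proof
      fix s assume s: "s \<in> {..<p}"
      have "g (h s) = s"
      proof -
        have "g (h s) = ((s + (p - k)) mod p + k) mod p" by (simp add: g_def h_def)
        also have "\<dots> = (s + (p - k) + k) mod p" by (simp add: mod_add_left_eq)
        also have "\<dots> = (s + p) mod p" using assms(2) by simp
        also have "\<dots> = s" using s by simp
        finally show ?thesis .
      qed
      moreover have "h s < p" using assms(1) by (simp add: h_def)
      ultimately show "s \<in> g ` {..<p}" by (metis imageI lessThan_iff)
    qed
  qed
  have "mom p j (sh p k f) = (\<Sum>r<p. f (g r) * int (h (g r)) ^ j)"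
  proof -
    have gd: "\<And>r. (r + k) mod p = g r" by (simp add: g_def)
    show ?thesis unfolding mom_def sh_def gd by (rule sum.cong) (auto simp: hg)
  qed
  also have "\<dots> = (\<Sum>s\<in>g ` {..<p}. f s * int (h s) ^ j)"
    by (rule sum.reindex[OF inj, symmetric, unfolded comp_def])
  also have "\<dots> = (\<Sum>s<p. f s * int (h s) ^ j)" using img by simp
  finally have e: "mom p j (sh p k f) = (\<Sum>s<p. f s * int (h s) ^ j)" .
  have "[(\<Sum>s<p. f s * int (h s) ^ j) = (\<Sum>s<p. f s * (int s + \<kappa>) ^ j)] (mod int p)"
  proof (rule cong_sum, rule cong_mult, rule cong_refl, rule cong_pow)
    fix s assume "s \<in> {..<p}"
    have "int (h s) = (int s + int (p - k)) mod int p" by (simp add: h_def zmod_int)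
    then have "[int (h s) = int s + int (p - k)] (mod int p)" by (simp add: cong_def)
    moreover have "[int s + int (p - k) = int s + \<kappa>] (mod int p)"
    proof -
      have "int p dvd int p - (\<kappa> + int k)" using assms(3) by simp
      then have "int p dvd int s + int (p - k) - (int s + \<kappa>)"
        by (rule dvd_eqI) (use assms(2) in simp)
      then show ?thesis by (simp add: cong_iff_dvd_diff)
    qed
    ultimately show "[int (h s) = int s + \<kappa>] (mod int p)" by (rule cong_trans)
  qed
  then show ?thesis using e by (simp add: cong_iff_dvd_diff)
qed

lemma mom_lin: "mom p j (\<lambda>r. a * f r - b * g r) = a * mom p j f - b * mom p j g"
  unfolding mom_def by (simp add: sum_subtractf sum_distrib_left algebra_simps)

lemma mom_scale: "mom p j (\<lambda>r. a * f r) = a * mom p j f"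
  unfolding mom_def by (simp add: sum_distrib_left algebra_simps)

lemma shpoly:
  fixes \<kappa> :: int
  shows "(\<Sum>s<p. f s * (int s + \<kappa>) ^ 0) = mom p 0 f"
    and "(\<Sum>s<p. f s * (int s + \<kappa>) ^ 1) = mom p 1 f + \<kappa> * mom p 0 f"
    and "(\<Sum>s<p. f s * (int s + \<kappa>) ^ 2) = mom p 2 f + 2 * \<kappa> * mom p 1 f + \<kappa>^2 * mom p 0 f"
    and "(\<Sum>s<p. f s * (int s + \<kappa>) ^ 3) = mom p 3 f + 3 * \<kappa> * mom p 2 f + 3 * \<kappa>^2 * mom p 1 f + \<kappa>^3 * mom p 0 f"
    and "(\<Sum>s<p. f s * (int s + \<kappa>) ^ 4) = mom p 4 f + 4 * \<kappa> * mom p 3 f + 6 * \<kappa>^2 * mom p 2 f + 4 * \<kappa>^3 * mom p 1 f + \<kappa>^4 * mom p 0 f"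
  unfolding mom_def
  by (simp_all add: sum.distrib sum_distrib_left power2_eq_square power3_eq_cube power4_eq_xxxx algebra_simps)




lemma ndvd_small: "prime p \<Longrightarrow> 7 \<le> p \<Longrightarrow> k \<in> {1,2,3,4,5,6} \<Longrightarrow> \<not> int p dvd int k"
proof
  assume pr: "prime p" and p7: "7 \<le> p" and k: "k \<in> {1,2,3,4,5,6}" and d: "int p dvd int k"
  then have d': "p dvd k" by simp
  have "p \<le> k" using dvd_imp_le[OF d'] k by auto
  with p7 k show False by auto
qed

locale cf =
  fixes p :: nat and w :: int
  assumes pr: "prime p" and p7: "7 \<le> p" and wr: "int p dvd w^2 + w + 1"
begin

abbreviation dv :: "int \<Rightarrow> bool" where "dv x \<equiv> int p dvd x"

lemma dvlin:
  assumes "dv xa" "dv xb" "dv xc" "dv xd" "dv xe" "dv xf" "dv xg"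
    and "z = ka*xa+kb*xb+kc*xc+kd*xd+ke*xe+kf*xf+kg*xg"
  shows "dv z"
  using assms by (simp add: dvd_add dvd_mult)

lemma prI: "prime (int p)" using pr by simp

lemma dv_mult: "dv (x * y) \<Longrightarrow> dv x \<or> dv y"
  using prI prime_dvd_mult_iff by blast

lemma nd0: "\<not> dv 1" "\<not> dv 2" "\<not> dv 3" "\<not> dv 4" "\<not> dv 5" "\<not> dv 6"
  using ndvd_small[OF pr p7, of 1] ndvd_small[OF pr p7, of 2] ndvd_small[OF pr p7, of 3]
    ndvd_small[OF pr p7, of 4] ndvd_small[OF pr p7, of 5] ndvd_small[OF pr p7, of 6] by auto

lemma nd: "\<not> dv 1" "\<not> dv 2" "\<not> dv 3" "\<not> dv 4" "\<not> dv 5" "\<not> dv 6" "\<not> dv 8" "\<not> dv 9"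
proof -
  show "\<not> dv 1" "\<not> dv 2" "\<not> dv 3" "\<not> dv 4" "\<not> dv 5" "\<not> dv 6" using nd0 by auto
  show "\<not> dv 8"
  proof
    assume "dv 8" then have "dv (2 * 4)" by simp
    then show False using dv_mult nd0 by blast
  qed
  show "\<not> dv 9"
  proof
    assume "dv 9" then have "dv (3 * 3)" by simp
    then show False using dv_mult nd0 by blast
  qed
qed

lemma ndm: "\<not> dv (-1)" "\<not> dv (-2)" "\<not> dv (-3)" "\<not> dv (-4)" "\<not> dv (-5)" "\<not> dv (-6)"
  using nd by simp_all

lemma w3: "dv (w^3 - 1)"
proof -
  have "w^3 - 1 = (w - 1) * (w^2 + w + 1)" by (simp add: algebra_simps power2_eq_square power3_eq_cube)
  then show ?thesis using wr by simp
qed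

lemma wnz: "\<not> dv w" "\<not> dv (w - 1)" "\<not> dv (w + 1)" "\<not> dv (w + 2)" "\<not> dv (1 - w)"
proof -
  show "\<not> dv w"
  proof
    assume "dv w"
    then have "dv (w * (w + 1))" by simp
    then have "dv (w^2 + w + 1 - w * (w + 1))" using wr by (simp add: dvd_diff)
    moreover have "w^2 + w + 1 - w * (w + 1) = 1" by (simp add: algebra_simps power2_eq_square)
    ultimately show False using nd by simp
  qed
  show "\<not> dv (w - 1)"
  proof
    assume "dv (w - 1)"
    then have "dv ((w - 1) * (w + 2))" by simp
    then have "dv (w^2 + w + 1 - (w - 1) * (w + 2))" using wr by (simp add: dvd_diff)
    moreover have "w^2 + w + 1 - (w - 1) * (w + 2) = 3" by (simp add: algebra_simps power2_eq_square)
    ultimately show False using nd by simp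
  qed
  then show "\<not> dv (1 - w)" by (simp add: dvd_diff_commute)
  show "\<not> dv (w + 1)"
  proof
    assume "dv (w + 1)"
    then have "dv ((w + 1) * w)" by simp
    then have "dv (w^2 + w + 1 - (w + 1) * w)" using wr by (simp add: dvd_diff)
    moreover have "w^2 + w + 1 - (w + 1) * w = 1" by (simp add: algebra_simps power2_eq_square)
    ultimately show False using nd by simp
  qed
  show "\<not> dv (w + 2)"
  proof
    assume "dv (w + 2)"
    then have "dv ((w + 2) * (w - 1))" by simp
    then have "dv (w^2 + w + 1 - (w + 2) * (w - 1))" using wr by (simp add: dvd_diff)
    moreover have "w^2 + w + 1 - (w + 2) * (w - 1) = 3" by (simp add: algebra_simps power2_eq_square)
    ultimately show False using nd by simp
  qed
qed

definition zf :: "(nat \<Rightarrow> int) \<Rightarrow> (nat \<Rightarrow> int) \<Rightarrow> nat \<Rightarrow> int" where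
  "zf a b = (\<lambda>r. w * a r - b ((r + 1) mod p))"

definition RR :: "(nat \<Rightarrow> int) \<Rightarrow> (nat \<Rightarrow> int) \<Rightarrow> bool" where
  "RR a b = (\<forall>r<p. dv (zf a b r))"

definition TT :: "(nat \<Rightarrow> int) \<Rightarrow> (nat \<Rightarrow> int) \<Rightarrow> nat" where
  "TT f g = card {r. r < p \<and> (\<not> dv (f r) \<or> \<not> dv (g ((r + 1) mod p)))}"

definition cond :: "(nat \<Rightarrow> int) \<Rightarrow> (nat \<Rightarrow> int) \<Rightarrow> (nat \<Rightarrow> int) \<Rightarrow> bool" where
  "cond a b c = (Hm p 2 a \<and> Hm p 2 b \<and> Hm p 2 c \<and>
     dv (mom p 2 b - w * mom p 2 a) \<and> dv (mom p 2 c - w * mom p 2 b) \<and> dv (mom p 2 a - w * mom p 2 c) \<and>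
     dv (mom p 3 a + mom p 3 b + mom p 3 c) \<and> dv (mom p 4 a + mom p 4 b + mom p 4 c))"

lemma cond_rot: "cond a b c \<Longrightarrow> cond b c a"
  unfolding cond_def by (simp add: algebra_simps)

lemma p0: "0 < p" using p7 by simp

lemma zf_sh: "zf a b = (\<lambda>r. w * a r - 1 * sh p 1 b r)"
  unfolding zf_def sh_def by simp

lemma Hm2D: "Hm p 2 f \<Longrightarrow> dv (mom p 0 f) \<and> dv (mom p 1 f)"
  unfolding Hm_def by auto

lemma sh1:
  assumes "Hm p 2 b"
  shows "dv (mom p 0 (sh p 1 b))" "dv (mom p 1 (sh p 1 b))"
    "dv (mom p 2 (sh p 1 b) - mom p 2 b)"
    "dv (mom p 3 (sh p 1 b) - (mom p 3 b - 3 * mom p 2 b))"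
    "dv (mom p 4 (sh p 1 b) - (mom p 4 b - 4 * mom p 3 b + 6 * mom p 2 b))"
proof -
  have m: "\<And>j. dv (mom p j (sh p 1 b) - (\<Sum>s<p. b s * (int s + (-1)) ^ j))"
    using mom_sh[OF p0, where k=1 and \<kappa>="-1"] p7 by simp
  have h: "dv (mom p 0 b)" "dv (mom p 1 b)" using Hm2D[OF assms] by auto
  note s = shpoly[where f=b and \<kappa>="-1" and p=p]
  show "dv (mom p 0 (sh p 1 b))"
    by (rule dvlin[OF m[of 0] h(1) dvd_0_right dvd_0_right dvd_0_right dvd_0_right dvd_0_right,
      where ka=1 and kb=1 and kc=0 and kd=0 and ke=0 and kf=0 and kg=0]) (simp only: s, simp)
  show "dv (mom p 1 (sh p 1 b))"
    by (rule dvlin[OF m[of 1] h(1) h(2) dvd_0_right dvd_0_right dvd_0_right dvd_0_right,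
      where ka=1 and kb="-1::int" and kc=1 and kd=0 and ke=0 and kf=0 and kg=0]) (simp only: s, simp)
  show "dv (mom p 2 (sh p 1 b) - mom p 2 b)"
    by (rule dvlin[OF m[of 2] h(1) h(2) dvd_0_right dvd_0_right dvd_0_right dvd_0_right,
      where ka=1 and kb=1 and kc="-2::int" and kd=0 and ke=0 and kf=0 and kg=0]) (simp only: s, simp)
  show "dv (mom p 3 (sh p 1 b) - (mom p 3 b - 3 * mom p 2 b))"
    by (rule dvlin[OF m[of 3] h(1) h(2) dvd_0_right dvd_0_right dvd_0_right dvd_0_right,
      where ka=1 and kb="-1::int" and kc=3 and kd=0 and ke=0 and kf=0 and kg=0]) (simp only: s, simp)
  show "dv (mom p 4 (sh p 1 b) - (mom p 4 b - 4 * mom p 3 b + 6 * mom p 2 b))"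
    by (rule dvlin[OF m[of 4] h(1) h(2) dvd_0_right dvd_0_right dvd_0_right dvd_0_right,
      where ka=1 and kb=1 and kc="-4::int" and kd=0 and ke=0 and kf=0 and kg=0]) (simp only: s, simp)
qed

lemma mom_zf: "mom p j (zf a b) = w * mom p j a - mom p j (sh p 1 b)"
  unfolding zf_sh mom_lin by simp

lemma zmom:
  assumes "Hm p 2 a" "Hm p 2 b"
  shows "dv (mom p 0 (zf a b))" "dv (mom p 1 (zf a b))"
    "dv (mom p 2 (zf a b) - (w * mom p 2 a - mom p 2 b))"
    "dv (mom p 3 (zf a b) - (w * mom p 3 a - mom p 3 b + 3 * mom p 2 b))"
    "dv (mom p 4 (zf a b) - (w * mom p 4 a - mom p 4 b + 4 * mom p 3 b - 6 * mom p 2 b))"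
proof -
  note s = sh1[OF assms(2)]
  have h: "dv (mom p 0 a)" "dv (mom p 1 a)" using Hm2D[OF assms(1)] by auto
  show "dv (mom p 0 (zf a b))"
    by (rule dvlin[OF h(1) s(1) dvd_0_right dvd_0_right dvd_0_right dvd_0_right dvd_0_right,
      where ka=w and kb="-1" and kc=0 and kd=0 and ke=0 and kf=0 and kg=0]) (simp add: mom_zf)
  show "dv (mom p 1 (zf a b))"
    by (rule dvlin[OF h(2) s(2) dvd_0_right dvd_0_right dvd_0_right dvd_0_right dvd_0_right,
      where ka=w and kb="-1" and kc=0 and kd=0 and ke=0 and kf=0 and kg=0]) (simp add: mom_zf)
  show "dv (mom p 2 (zf a b) - (w * mom p 2 a - mom p 2 b))"
    by (rule dvlin[OF s(3) dvd_0_right dvd_0_right dvd_0_right dvd_0_right dvd_0_right dvd_0_right,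
      where ka="-1" and kb=0 and kc=0 and kd=0 and ke=0 and kf=0 and kg=0]) (simp add: mom_zf)
  show "dv (mom p 3 (zf a b) - (w * mom p 3 a - mom p 3 b + 3 * mom p 2 b))"
    by (rule dvlin[OF s(4) dvd_0_right dvd_0_right dvd_0_right dvd_0_right dvd_0_right dvd_0_right,
      where ka="-1" and kb=0 and kc=0 and kd=0 and ke=0 and kf=0 and kg=0]) (simp add: mom_zf)
  show "dv (mom p 4 (zf a b) - (w * mom p 4 a - mom p 4 b + 4 * mom p 3 b - 6 * mom p 2 b))"
    by (rule dvlin[OF s(5) dvd_0_right dvd_0_right dvd_0_right dvd_0_right dvd_0_right dvd_0_right,
      where ka="-1" and kb=0 and kc=0 and kd=0 and ke=0 and kf=0 and kg=0]) (simp add: mom_zf)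
qed

lemma Hm_Suc: "Hm p (Suc m) f \<longleftrightarrow> Hm p m f \<and> dv (mom p m f)"
  unfolding Hm_def by (auto simp: less_Suc_eq)

lemma Hm_0: "Hm p 0 f" unfolding Hm_def by simp

lemma Hm_simps:
  "Hm p 2 f \<longleftrightarrow> dv (mom p 0 f) \<and> dv (mom p 1 f)"
  "Hm p 3 f \<longleftrightarrow> dv (mom p 0 f) \<and> dv (mom p 1 f) \<and> dv (mom p 2 f)"
  "Hm p 4 f \<longleftrightarrow> dv (mom p 0 f) \<and> dv (mom p 1 f) \<and> dv (mom p 2 f) \<and> dv (mom p 3 f)"
  "Hm p 5 f \<longleftrightarrow> dv (mom p 0 f) \<and> dv (mom p 1 f) \<and> dv (mom p 2 f) \<and> dv (mom p 3 f) \<and> dv (mom p 4 f)"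
  by (simp_all add: Hm_Suc Hm_0 eval_nat_numeral)

lemma zH3:
  assumes "Hm p 2 a" "Hm p 2 b" "dv (mom p 2 b - w * mom p 2 a)"
  shows "Hm p 3 (zf a b)"
proof -
  note z = zmom[OF assms(1,2)]
  have "dv (mom p 2 (zf a b))"
    by (rule dvlin[OF z(3) assms(3) dvd_0_right dvd_0_right dvd_0_right dvd_0_right dvd_0_right,
      where ka=1 and kb="-1" and kc=0 and kd=0 and ke=0 and kf=0 and kg=0]) simp
  then show ?thesis using z(1,2) by (simp add: Hm_simps)
qed

lemma pw_mom: "\<forall>r<p. dv (f r) \<Longrightarrow> dv (mom p j f)"
  unfolding mom_def by (rule dvd_sum) simp

lemma K2:
  assumes "cond a b c" "RR a b" "RR b c"
  shows "dv (mom p 2 c)"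
proof -
  have H: "Hm p 2 a" "Hm p 2 b" "Hm p 2 c" and e4: "dv (mom p 2 b - w * mom p 2 a)"
    and e5: "dv (mom p 2 c - w * mom p 2 b)" and e3: "dv (mom p 3 a + mom p 3 b + mom p 3 c)"
    using assms(1) unfolding cond_def by auto
  have z1: "dv (mom p 3 (zf a b))" using assms(2) pw_mom unfolding RR_def by blast
  have z2: "dv (mom p 3 (zf b c))" using assms(3) pw_mom unfolding RR_def by blast
  have e1: "dv (w * mom p 3 a - mom p 3 b + 3 * mom p 2 b)"
    by (rule dvlin[OF z1 zmom(4)[OF H(1,2)] dvd_0_right dvd_0_right dvd_0_right dvd_0_right dvd_0_right,
      where ka=1 and kb="-1" and kc=0 and kd=0 and ke=0 and kf=0 and kg=0]) simp
  have e2: "dv (w * mom p 3 b - mom p 3 c + 3 * mom p 2 c)"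
    by (rule dvlin[OF z2 zmom(4)[OF H(2,3)] dvd_0_right dvd_0_right dvd_0_right dvd_0_right dvd_0_right,
      where ka=1 and kb="-1" and kc=0 and kd=0 and ke=0 and kf=0 and kg=0]) simp
  have "dv (3 * ((w + 2) * mom p 2 c))"
    by (rule dvlin[OF wr e3 e1 e2 e5 dvd_0_right dvd_0_right,
      where ka="mom p 3 c" and kb="-(w^2)" and kc=w and kd="1+w" and ke=3 and kf=0 and kg=0])
       (simp add: algebra_simps power2_eq_square)
  then show ?thesis using dv_mult nd wnz by blast
qed

end



lemma modc: "0 < p \<Longrightarrow> int p dvd (int ((x + k) mod p) - (int x + int k))"
proof -
  assume "0 < p"
  have e: "int ((x + k) mod p) = (int x + int k) mod int p" by (simp add: zmod_int)
  have "(int x + int k) mod int p - (int x + int k) = - (int p * ((int x + int k) div int p))"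
    using div_mult_mod_eq[of "int x + int k" "int p"] by (simp add: algebra_simps)
  then show ?thesis unfolding e by simp
qed

context cf begin

lemma modc3: "dv (int ((x + 3) mod p) - int x - 3)"
  using modc[OF p0, of x 3] by (simp add: algebra_simps)

lemma modcm3: "dv (int ((x + (p - 3)) mod p) - int x + 3)"
proof -
  have a: "dv (int ((x + (p - 3)) mod p) - (int x + int (p - 3)))" using modc[OF p0] by blast
  have ip: "int (p - 3) = int p - 3" using p7 by simp
  have "dv ((int ((x + (p - 3)) mod p) - (int x + int (p - 3))) + int p)" by (rule dvd_add[OF a dvd_refl])
  then show ?thesis by (rule dvd_eqI) (simp add: ip)
qed

lemma res_eq: "x < p \<Longrightarrow> y < p \<Longrightarrow> dv (int x - int y) \<Longrightarrow> x = y"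
  using dvd_diff_lt_eq by blast

lemma nz3: "\<not> dv (3 * w)" "\<not> dv (3 * (w + 1))" "\<not> dv (3 * (w + 2))" "\<not> dv (3 * (w - 1))"
  using dv_mult nd wnz by blast+

lemma four:
  assumes U: "U \<subseteq> {..<p}" "card U = 3" and x: "x0 \<in> U" "x1 \<in> U" "x2 \<in> U" "x3 \<in> U"
    and d: "d = 3 \<or> d = -3"
    and h: "dv (int x1 - int x0 - d)" "dv (int x2 - int x1 - d)" "dv (int x3 - int x2 - d)"
  shows False
proof -
  have lt: "x0 < p" "x1 < p" "x2 < p" "x3 < p" using U x by auto
  have nd3: "\<not> dv d" "\<not> dv (2 * d)" "\<not> dv (3 * d)" using d nd by auto
  have "x0 \<noteq> x1"
  proof assume "x0 = x1" then have "dv d" using h(1) by simp then show False using nd3 by simp qed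
  moreover have "x1 \<noteq> x2"
  proof assume "x1 = x2" then have "dv d" using h(2) by simp then show False using nd3 by simp qed
  moreover have "x2 \<noteq> x3"
  proof assume "x2 = x3" then have "dv d" using h(3) by simp then show False using nd3 by simp qed
  moreover have "x0 \<noteq> x2"
  proof
    assume "x0 = x2"
    then have "dv (2 * d)"
      by (intro dvlin[OF h(1) h(2) dvd_0_right dvd_0_right dvd_0_right dvd_0_right dvd_0_right,
        where ka="-1" and kb="-1" and kc=0 and kd=0 and ke=0 and kf=0 and kg=0]) simp
    then show False using nd3 by simp
  qed
  moreover have "x1 \<noteq> x3"
  proof
    assume "x1 = x3"
    then have "dv (2 * d)"
      by (intro dvlin[OF h(2) h(3) dvd_0_right dvd_0_right dvd_0_right dvd_0_right dvd_0_right,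
        where ka="-1" and kb="-1" and kc=0 and kd=0 and ke=0 and kf=0 and kg=0]) simp
    then show False using nd3 by simp
  qed
  moreover have "x0 \<noteq> x3"
  proof
    assume "x0 = x3"
    then have "dv (3 * d)"
      by (intro dvlin[OF h(1) h(2) h(3) dvd_0_right dvd_0_right dvd_0_right dvd_0_right,
        where ka="-1" and kb="-1" and kc="-1" and kd=0 and ke=0 and kf=0 and kg=0]) simp
    then show False using nd3 by simp
  qed
  ultimately have "card {x0, x1, x2, x3} = 4" by auto
  moreover have "{x0, x1, x2, x3} \<subseteq> U" using x by auto
  moreover have "finite U" using U(1) finite_subset by blast
  ultimately have "4 \<le> card U" using card_mono by metis
  then show False using U(2) by simp
qed

lemma comb:
  assumes U: "U \<subseteq> {..<p}" "card U = 3"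
   and h1: "\<forall>u\<in>U. (u + 3) mod p \<notin> U \<longrightarrow> X1 u"
   and h2: "\<forall>u\<in>U. (u + (p - 3)) mod p \<notin> U \<longrightarrow> X2 u"
   and h3: "\<forall>u v. X1 u \<longrightarrow> X2 v \<longrightarrow> \<not> dv (int u - int v) \<and> \<not> dv (int u - int v - 3) \<and> \<not> dv (int u - int v - 6)"
  shows False
proof -
  have ex: "\<exists>t\<in>U. (t + 3) mod p \<notin> U"
  proof (rule ccontr)
    assume "\<not> ?thesis" then have all: "\<forall>u\<in>U. (u + 3) mod p \<in> U" by blast
    have "U \<noteq> {}" using U(2) by auto
    then obtain x0 where x0: "x0 \<in> U" by blast
    define x1 where "x1 = (x0 + 3) mod p"
    define x2 where "x2 = (x1 + 3) mod p"
    define x3 where "x3 = (x2 + 3) mod p"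
    have xs: "x1 \<in> U" "x2 \<in> U" "x3 \<in> U" using all x0 x1_def x2_def x3_def by auto
    show False
      by (rule four[OF U x0 xs, of 3]) (simp_all add: x1_def x2_def x3_def modc3)
  qed
  then obtain t where t: "t \<in> U" "(t + 3) mod p \<notin> U" by blast
  have X1t: "X1 t" using h1 t by blast
  define s where "s = (t + (p - 3)) mod p"
  have ds: "dv (int s - int t + 3)" using modcm3[of t] s_def by simp
  have sU: "s \<in> U"
  proof (rule ccontr)
    assume "s \<notin> U" then have "X2 t" using h2 t(1) s_def by blast
    then show False using h3 X1t by force
  qed
  define r where "r = (s + (p - 3)) mod p"
  have dr: "dv (int r - int s + 3)" using modcm3[of s] r_def by simp
  have rU: "r \<in> U"
  proof (rule ccontr)
    assume "r \<notin> U" then have "X2 s" using h2 sU r_def by blast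
    then have "\<not> dv (int t - int s - 3)" using h3 X1t by blast
    moreover have "dv (int t - int s - 3)" using ds by (simp add: dvd_diff_commute[of _ "int s"] algebra_simps)
      (metis diff_diff_eq2 dvd_minus_iff minus_diff_eq)
    ultimately show False by blast
  qed
  define q where "q = (r + (p - 3)) mod p"
  have dq: "dv (int q - int r + 3)" using modcm3[of r] q_def by simp
  have qU: "q \<in> U"
  proof (rule ccontr)
    assume "q \<notin> U" then have "X2 r" using h2 rU q_def by blast
    then have "\<not> dv (int t - int r - 6)" using h3 X1t by blast
    moreover have "dv (int t - int r - 6)"
      by (rule dvlin[OF ds dr dvd_0_right dvd_0_right dvd_0_right dvd_0_right dvd_0_right,
        where ka="-1" and kb="-1" and kc=0 and kd=0 and ke=0 and kf=0 and kg=0]) simp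
    ultimately show False by blast
  qed
  show False
    by (rule four[OF U t(1) sU rU qU, of "-3"]) (use ds dr dq in simp_all)
qed

lemma idx1: "((r + 1) mod p + 1) mod p = (r + 2) mod p"
proof -
  have e: "r + 1 + 1 = r + 2" by simp
  have "((r + 1) mod p + 1) mod p = (r + 1 + 1) mod p" by (rule mod_add_left_eq)
  then show ?thesis by (simp only: e)
qed
lemma idx2: "((r + 2) mod p + 1) mod p = (r + 3) mod p"
proof -
  have e: "r + 2 + 1 = r + 3" by simp
  have "((r + 2) mod p + 1) mod p = (r + 2 + 1) mod p" by (rule mod_add_left_eq)
  then show ?thesis by (simp only: e)
qed
lemma idx3: "((u + 3) mod p + (p - 2)) mod p = (u + 1) mod p"
proof -
  have e: "u + 3 + (p - 2) = (u + 1) + p" using p7 by simp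
  have "((u + 3) mod p + (p - 2)) mod p = (u + 3 + (p - 2)) mod p" by (rule mod_add_left_eq)
  also have "\<dots> = ((u + 1) + p) mod p" by (simp only: e)
  also have "\<dots> = (u + 1) mod p" by (rule mod_add_self2)
  finally show ?thesis .
qed
lemma idx4: "((u + (p - 3)) mod p + 1) mod p = (u + (p - 2)) mod p"
proof -
  have e: "u + (p - 3) + 1 = u + (p - 2)" using p7 by simp
  have "((u + (p - 3)) mod p + 1) mod p = (u + (p - 3) + 1) mod p" by (rule mod_add_left_eq)
  then show ?thesis by (simp only: e)
qed
lemma idx5: "u < p \<Longrightarrow> ((u + (p - 3)) mod p + 3) mod p = u"
proof -
  assume u: "u < p"
  have e: "u + (p - 3) + 3 = u + p" using p7 by simp
  have "((u + (p - 3)) mod p + 3) mod p = (u + (p - 3) + 3) mod p" by (rule mod_add_left_eq)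
  also have "\<dots> = (u + p) mod p" by (simp only: e)
  also have "\<dots> = u" using u by simp
  finally show ?thesis .
qed
lemma idx6: "((u + (p - 2)) mod p + 1) mod p = (u + (p - 1)) mod p"
proof -
  have e: "u + (p - 2) + 1 = u + (p - 1)" using p7 by simp
  have "((u + (p - 2)) mod p + 1) mod p = (u + (p - 2) + 1) mod p" by (rule mod_add_left_eq)
  then show ?thesis by (simp only: e)
qed
lemma idx7: "u < p \<Longrightarrow> ((u + (p - 1)) mod p + 1) mod p = u"
proof -
  assume u: "u < p"
  have e: "u + (p - 1) + 1 = u + p" using p7 by simp
  have "((u + (p - 1)) mod p + 1) mod p = (u + (p - 1) + 1) mod p" by (rule mod_add_left_eq)
  also have "\<dots> = (u + p) mod p" by (simp only: e)
  also have "\<dots> = u" using u by simp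
  finally show ?thesis .
qed
lemma idx8: "s < p \<Longrightarrow> ((s + 2) mod p + (p - 2)) mod p = s"
proof -
  assume u: "s < p"
  have e: "s + 2 + (p - 2) = s + p" using p7 by simp
  have "((s + 2) mod p + (p - 2)) mod p = (s + 2 + (p - 2)) mod p" by (rule mod_add_left_eq)
  also have "\<dots> = (s + p) mod p" by (simp only: e)
  also have "\<dots> = s" using u by simp
  finally show ?thesis .
qed
lemma idx9: "r < p \<Longrightarrow> ((r + (p - 2)) mod p + 2) mod p = r"
proof -
  assume u: "r < p"
  have e: "r + (p - 2) + 2 = r + p" using p7 by simp
  have "((r + (p - 2)) mod p + 2) mod p = (r + (p - 2) + 2) mod p" by (rule mod_add_left_eq)
  also have "\<dots> = (r + p) mod p" by (simp only: e)
  also have "\<dots> = r" using u by simp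
  finally show ?thesis .
qed

lemma PI:
  assumes "RR a b" "r < p"
  shows "dv (w^2 * zf b c r + w * zf c a ((r + 1) mod p) - (b r - b ((r + 3) mod p)))"
proof -
  have "dv (zf a b ((r + 2) mod p))" using assms unfolding RR_def by simp
  then have R: "dv (w * a ((r + 2) mod p) - b ((r + 3) mod p))" by (simp only: zf_def idx2)
  show ?thesis
    by (rule dvlin[OF w3 R dvd_0_right dvd_0_right dvd_0_right dvd_0_right dvd_0_right,
      where ka="b r" and kb="-1" and kc=0 and kd=0 and ke=0 and kf=0 and kg=0])
      (simp only: zf_def idx1, simp add: algebra_simps power2_eq_square power3_eq_cube)
qed

lemma sep:
  assumes "dv (int u - int t - 3 + 3 * w) \<or> dv (int u - int t - 5)"
    and "dv (int v - int t - 3) \<or> dv (int v - int t - 2 + 3 * w)"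
  shows "\<not> dv (int u - int v) \<and> \<not> dv (int u - int v - 3) \<and> \<not> dv (int u - int v - 6)"
proof -
  note N = nz3 nd ndm
  from assms show ?thesis
  proof (elim disjE)
    assume h1: "dv (int u - int t - 3 + 3 * w)" and h2: "dv (int v - int t - 3)"
    have "\<not> dv (int u - int v - d)" if "d = 0 \<or> d = 3 \<or> d = 6" for d
    proof
      assume h: "dv (int u - int v - d)"
      have "dv (3 * w + d)" by (rule dvd_eqI[OF dvd_diff[OF dvd_diff[OF h1 h2] h]]) (simp add: algebra_simps)
      then show False using that N by (auto simp: algebra_simps)
    qed
    then show ?thesis by fastforce
  next
    assume h1: "dv (int u - int t - 3 + 3 * w)" and h2: "dv (int v - int t - 2 + 3 * w)"
    have "\<not> dv (int u - int v - d)" if "d = 0 \<or> d = 3 \<or> d = 6" for d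
    proof
      assume h: "dv (int u - int v - d)"
      have "dv (1 - d)" by (rule dvd_eqI[OF dvd_diff[OF h dvd_diff[OF h1 h2]]]) (simp add: algebra_simps)
      then show False using that N by auto
    qed
    then show ?thesis by fastforce
  next
    assume h1: "dv (int u - int t - 5)" and h2: "dv (int v - int t - 3)"
    have "\<not> dv (int u - int v - d)" if "d = 0 \<or> d = 3 \<or> d = 6" for d
    proof
      assume h: "dv (int u - int v - d)"
      have "dv (2 - d)" by (rule dvd_eqI[OF dvd_diff[OF h dvd_diff[OF h1 h2]]]) (simp add: algebra_simps)
      then show False using that N by auto
    qed
    then show ?thesis by fastforce
  next
    assume h1: "dv (int u - int t - 5)" and h2: "dv (int v - int t - 2 + 3 * w)"
    have "\<not> dv (int u - int v - d)" if "d = 0 \<or> d = 3 \<or> d = 6" for d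
    proof
      assume h: "dv (int u - int v - d)"
      have "dv (3 * w + 3 - d)" by (rule dvd_eqI[OF dvd_diff[OF h dvd_diff[OF h1 h2]]]) (simp add: algebra_simps)
      then show False using that N by (auto simp: algebra_simps)
    qed
    then show ?thesis by fastforce
  qed
qed

end


context cf begin

lemma card_ins1:
  assumes "finite S" "U \<subseteq> S" "card S = card U + 1" "finite U"
  obtains t where "t \<notin> U" "S = insert t U"
proof -
  have "card (S - U) = 1" using card_Diff_subset[OF assms(4,2)] assms(3) by simp
  then obtain t where t: "S - U = {t}" by (auto simp: card_Suc_eq)
  then have "t \<notin> U" "S = insert t U" using assms(2) by auto
  then show ?thesis using that by blast
qed

lemma mom_y:
  assumes "Hm p 3 z"
  shows "Hm p 3 (sh p (p - 2) z)" "dv (mom p 3 (sh p (p - 2) z) - mom p 3 z)"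
    "dv (mom p 4 (sh p (p - 2) z) - (mom p 4 z + 8 * mom p 3 z))"
proof -
  have k: "dv (2 + int (p - 2))" using p7 by simp
  have m: "\<And>j. dv (mom p j (sh p (p - 2) z) - (\<Sum>s<p. z s * (int s + 2) ^ j))"
    using mom_sh[OF p0 _ k] by simp
  have h: "dv (mom p 0 z)" "dv (mom p 1 z)" "dv (mom p 2 z)" using assms by (auto simp: Hm_simps)
  note s = shpoly[where f=z and \<kappa>=2 and p=p]
  have "dv (mom p 0 (sh p (p - 2) z))"
    by (rule dvlin[OF m[of 0] h(1) dvd_0_right dvd_0_right dvd_0_right dvd_0_right dvd_0_right,
      where ka=1 and kb=1 and kc=0 and kd=0 and ke=0 and kf=0 and kg=0]) (simp only: s, simp)
  moreover have "dv (mom p 1 (sh p (p - 2) z))"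
    by (rule dvlin[OF m[of 1] h(1) h(2) dvd_0_right dvd_0_right dvd_0_right dvd_0_right,
      where ka=1 and kb=2 and kc=1 and kd=0 and ke=0 and kf=0 and kg=0]) (simp only: s, simp)
  moreover have "dv (mom p 2 (sh p (p - 2) z))"
    by (rule dvlin[OF m[of 2] h(1) h(2) h(3) dvd_0_right dvd_0_right dvd_0_right,
      where ka=1 and kb=4 and kc=4 and kd=1 and ke=0 and kf=0 and kg=0]) (simp only: s, simp)
  ultimately show "Hm p 3 (sh p (p - 2) z)" by (simp add: Hm_simps)
  show "dv (mom p 3 (sh p (p - 2) z) - mom p 3 z)"
    by (rule dvlin[OF m[of 3] h(1) h(2) h(3) dvd_0_right dvd_0_right dvd_0_right,
      where ka=1 and kb=8 and kc=12 and kd=6 and ke=0 and kf=0 and kg=0]) (simp only: s, simp)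
  show "dv (mom p 4 (sh p (p - 2) z) - (mom p 4 z + 8 * mom p 3 z))"
    by (rule dvlin[OF m[of 4] h(1) h(2) h(3) dvd_0_right dvd_0_right dvd_0_right,
      where ka=1 and kb=16 and kc=32 and kd=24 and ke=0 and kf=0 and kg=0]) (simp only: s, simp)
qed

lemma geom:
  assumes C: "cond a b c" and R: "RR a b" and mu: "\<not> dv (mom p 2 b)"
    and U3: "card (supp p b) = 3" and T1: "TT b c = 4" and T2: "TT c a = 4"
  shows False
proof -
  from C have H: "Hm p 2 a" "Hm p 2 b" "Hm p 2 c"
    and e4: "dv (mom p 2 b - w * mom p 2 a)" and e5: "dv (mom p 2 c - w * mom p 2 b)"
    and e7: "dv (mom p 2 a - w * mom p 2 c)"
    and e3: "dv (mom p 3 a + mom p 3 b + mom p 3 c)" and f3: "dv (mom p 4 a + mom p 4 b + mom p 4 c)"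
    unfolding cond_def by auto
  define U where "U = supp p b"
  have fU: "finite U" "U \<subseteq> {..<p}" using supp_sub U_def by auto
  have cU: "card U = 3" using U3 U_def by simp
  have bU: "\<forall>r<p. r \<notin> U \<longrightarrow> dv (b r)" unfolding U_def supp_def by auto
  define S1 where "S1 = {r. r < p \<and> (\<not> dv (b r) \<or> \<not> dv (c ((r + 1) mod p)))}"
  have cS1: "card S1 = 4" using T1 unfolding TT_def S1_def by simp
  have fS1: "finite S1" "S1 \<subseteq> {..<p}" unfolding S1_def by auto
  have US1: "U \<subseteq> S1" unfolding U_def S1_def supp_def by auto
  obtain t1 where t1: "t1 \<notin> U" "S1 = insert t1 U"
    using card_ins1[OF fS1(1) US1 _ fU(1)] cS1 cU by auto
  have t1p: "t1 < p" using t1 fS1 by auto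
  define z1 where "z1 = zf b c"
  have Hz1: "Hm p 3 z1" unfolding z1_def by (rule zH3[OF H(2,3) e5])
  have sz1: "\<forall>r<p. r \<notin> S1 \<longrightarrow> dv (z1 r)" unfolding S1_def z1_def zf_def by auto
  define z2 where "z2 = zf c a"
  have Hz2: "Hm p 3 z2" unfolding z2_def by (rule zH3[OF H(3,1) e7])
  define S2 where "S2 = {r. r < p \<and> (\<not> dv (c r) \<or> \<not> dv (a ((r + 1) mod p)))}"
  have cS2: "card S2 = 4" using T2 unfolding TT_def S2_def by simp
  define S2' where "S2' = (\<lambda>s. (s + 2) mod p) ` S2"
  have injS2: "inj_on (\<lambda>s. (s + 2) mod p) S2"
  proof (rule inj_onI)
    fix x y assume xy: "x \<in> S2" "y \<in> S2" and e: "(x + 2) mod p = (y + 2) mod p"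
    have lt: "x < p" "y < p" using xy unfolding S2_def by auto
    have "((x + 2) mod p + (p - 2)) mod p = ((y + 2) mod p + (p - 2)) mod p" using e by simp
    then show "x = y" using idx8[OF lt(1)] idx8[OF lt(2)] by metis
  qed
  have cS2': "card S2' = 4" using card_image[OF injS2] cS2 S2'_def by simp
  have fS2': "finite S2'" "S2' \<subseteq> {..<p}" unfolding S2'_def S2_def using p0 by auto
  define y where "y = sh p (p - 2) z2"
  have sy: "\<forall>r<p. r \<notin> S2' \<longrightarrow> dv (y r)"
  proof (intro allI impI)
    fix r assume r: "r < p" "r \<notin> S2'"
    define s where "s = (r + (p - 2)) mod p"
    have sp: "s < p" using p0 s_def by simp
    have rs: "(s + 2) mod p = r" using idx9[OF r(1)] s_def by simp
    have "s \<notin> S2" using r(2) rs unfolding S2'_def by (metis imageI)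
    then have "dv (c s)" "dv (a ((s + 1) mod p))" using sp unfolding S2_def by auto
    then show "dv (y r)" unfolding y_def sh_def z2_def zf_def s_def[symmetric] by simp
  qed
  have US2': "U \<subseteq> S2'"
  proof
    fix u assume u: "u \<in> U"
    then have up: "u < p" and nb: "\<not> dv (b u)" unfolding U_def supp_def by auto
    define s where "s = (u + (p - 2)) mod p"
    define v where "v = (u + (p - 1)) mod p"
    have sv: "(s + 1) mod p = v" unfolding s_def v_def by (rule idx6)
    have vu: "(v + 1) mod p = u" unfolding v_def by (rule idx7[OF up])
    have "dv (zf a b v)" using R p0 unfolding RR_def v_def by simp
    then have Rv: "dv (w * a v - b u)" unfolding zf_def vu by simp
    have "\<not> dv (a v)"
    proof
      assume av: "dv (a v)"
      have "dv (w * a v - (w * a v - b u))" by (rule dvd_diff[OF dvd_mult[OF av] Rv])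
      then show False using nb by simp
    qed
    then have "s \<in> S2" unfolding S2_def using sv p0 s_def by simp
    moreover have "(s + 2) mod p = u" using idx9[OF up] s_def by simp
    ultimately show "u \<in> S2'" unfolding S2'_def by (metis imageI)
  qed
  obtain t2 where t2: "t2 \<notin> U" "S2' = insert t2 U"
    using card_ins1[OF fS2'(1) US2' _ fU(1)] cS2' cU by auto
  have t2p: "t2 < p" using t2 fS2' by auto
  note Y = mom_y[OF Hz2, folded y_def]
  have sumS1: "(\<Sum>c\<in>S1. int c) = int t1 + (\<Sum>c\<in>U. int c)" using t1 fU by simp
  have sumS2: "(\<Sum>c\<in>S2'. int c) = int t2 + (\<Sum>c\<in>U. int c)" using t2 fU by simp
  have A: "dv (mom p 4 z1 - (int t1 + (\<Sum>c\<in>U. int c)) * mom p 3 z1)"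
    using Symm[OF Hz1 fS1(1) _ sz1] cS1 sumS1 by (simp add: numeral_eq_Suc)
  have B: "dv (mom p 4 y - (int t2 + (\<Sum>c\<in>U. int c)) * mom p 3 y)"
    using Symm[OF Y(1) fS2'(1) _ sy] cS2' sumS2 by (simp add: numeral_eq_Suc)
  have zab3: "dv (mom p 3 (zf a b))" and zab4: "dv (mom p 4 (zf a b))"
    using R pw_mom unfolding RR_def by blast+
  have e1: "dv (w * mom p 3 a - mom p 3 b + 3 * mom p 2 b)"
    by (rule dvlin[OF zab3 zmom(4)[OF H(1,2)] dvd_0_right dvd_0_right dvd_0_right dvd_0_right dvd_0_right,
      where ka=1 and kb="-1" and kc=0 and kd=0 and ke=0 and kf=0 and kg=0]) simp
  have f1: "dv (w * mom p 4 a - mom p 4 b + 4 * mom p 3 b - 6 * mom p 2 b)"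
    by (rule dvlin[OF zab4 zmom(5)[OF H(1,2)] dvd_0_right dvd_0_right dvd_0_right dvd_0_right dvd_0_right,
      where ka=1 and kb="-1" and kc=0 and kd=0 and ke=0 and kf=0 and kg=0]) simp
  note D1 = zmom(4)[OF H(2,3), folded z1_def]
  note F1 = zmom(5)[OF H(2,3), folded z1_def]
  note D2 = zmom(4)[OF H(3,1), folded z2_def]
  note F2 = zmom(5)[OF H(3,1), folded z2_def]
  define D where "D = mom p 3 z1"
  define \<sigma> where "\<sigma> = (\<Sum>c\<in>U. int c)"
  have G1: "dv (D - 3 * mom p 2 b * (w - w^2))"
    by (rule dvlin[OF D1 wr e5 e1 e3 dvd_0_right dvd_0_right,
      where ka=1 and kb="mom p 3 b - (w - 1) * mom p 3 a" and kc=3 and kd="w^2" and ke="-1" and kf=0 and kg=0])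
      (simp add: D_def algebra_simps power2_eq_square)
  have G2: "dv (mom p 3 z2 + D)"
    by (rule dvlin[OF D2 D1 e1 e3 wr e4 e5,
      where ka=1 and kb=1 and kc="-1" and kd="w - 1" and ke="3 * mom p 2 a" and kf="3 * (1 + w)" and kg=3])
      (simp add: D_def algebra_simps power2_eq_square)
  have G3a: "dv ((w * mom p 4 b - mom p 4 c + 4 * mom p 3 c - 6 * mom p 2 c) + (w * mom p 4 c - mom p 4 a + 4 * mom p 3 a - 6 * mom p 2 a))"
    by (rule dvlin[OF f1 f3 e3 wr e4 e5 dvd_0_right,
      where ka="-1" and kb="w - 1" and kc=4 and kd="-6 * mom p 2 a" and ke="-6 * (1 + w)" and kf="-6" and kg=0])
      (simp add: algebra_simps power2_eq_square)
  have G3: "dv (mom p 4 z1 + mom p 4 z2)"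
    by (rule dvlin[OF F1 F2 G3a dvd_0_right dvd_0_right dvd_0_right dvd_0_right,
      where ka=1 and kb=1 and kc=1 and kd=0 and ke=0 and kf=0 and kg=0]) (simp add: algebra_simps)
  have Dt: "dv (D * (int t1 - int t2 + 8))"
    by (rule dvlin[OF A B Y(3) G3 Y(2) G2 dvd_0_right,
      where ka="-1" and kb="-1" and kc=1 and kd=1 and ke="-(int t2 + \<sigma>)" and kf="8 - int t2 - \<sigma>" and kg=0])
      (simp add: D_def \<sigma>_def algebra_simps)
  have nD: "\<not> dv D"
  proof
    assume "dv D"
    then have "dv (D - (D - 3 * mom p 2 b * (w - w^2)))" using G1 by (rule dvd_diff)
    then have "dv (3 * (mom p 2 b * (w * (1 - w))))" by (simp add: algebra_simps power2_eq_square)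
    then show False using dv_mult nd mu wnz by blast
  qed
  have Tt: "dv (int t1 - int t2 + 8)" using dv_mult[OF Dt] nD by blast
  define Q where "Q = (\<lambda>u. (\<Prod>c\<in>U - {u}. int u - int c))"
  have LB: "dv (b u * Q u - mom p 2 b)" if u: "u \<in> U" for u
  proof -
    have "u < p" using u fU by auto
    then show ?thesis unfolding Q_def using Lagr[OF H(2) fU(1) _ bU u] cU by simp
  qed
  have LZ: "dv (z1 u * ((int u - int t1) * Q u) - D)" if u: "u \<in> U" for u
  proof -
    have up: "u < p" using u fU by auto
    have uS: "u \<in> S1" using u US1 by auto
    have "dv (z1 u * (\<Prod>c\<in>S1 - {u}. int u - int c) - mom p 3 z1)"
      using Lagr[OF Hz1 fS1(1) _ sz1 uS up] cS1 by simp
    moreover have "S1 - {u} = insert t1 (U - {u})" using t1 u by auto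
    moreover have "t1 \<notin> U - {u}" using t1 by auto
    ultimately show ?thesis unfolding Q_def D_def using fU(1) by simp
  qed
  have LY: "dv (y u * ((int u - int t2) * Q u) - mom p 3 y)" if u: "u \<in> U" for u
  proof -
    have up: "u < p" using u fU by auto
    have uS: "u \<in> S2'" using u US2' by auto
    have "dv (y u * (\<Prod>c\<in>S2' - {u}. int u - int c) - mom p 3 y)"
      using Lagr[OF Y(1) fS2'(1) _ sy uS up] cS2' by simp
    moreover have "S2' - {u} = insert t2 (U - {u})" using t2 u by auto
    moreover have "t2 \<notin> U - {u}" using t2 by auto
    ultimately show ?thesis unfolding Q_def using fU(1) by simp
  qed
  have M: "dv (mom p 3 y + D)"
    by (rule dvlin[OF Y(2) G2 dvd_0_right dvd_0_right dvd_0_right dvd_0_right dvd_0_right,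
      where ka=1 and kb=1 and kc=0 and kd=0 and ke=0 and kf=0 and kg=0]) simp
  have h1: "\<forall>u\<in>U. (u + 3) mod p \<notin> U \<longrightarrow> (dv (int u - int t1 - 3 + 3 * w) \<or> dv (int u - int t1 - 5))"
  proof (intro ballI impI)
    fix u assume u: "u \<in> U" and v3: "(u + 3) mod p \<notin> U"
    have up: "u < p" using u fU by auto
    show "dv (int u - int t1 - 3 + 3 * w) \<or> dv (int u - int t1 - 5)"
    proof (cases "(u + 3) mod p = t2")
      case True
      have "dv (int u - int t1 - 5)"
        by (rule dvlin[OF modc3[of u] Tt dvd_0_right dvd_0_right dvd_0_right dvd_0_right dvd_0_right,
          where ka="-1" and kb="-1" and kc=0 and kd=0 and ke=0 and kf=0 and kg=0]) (simp add: True algebra_simps)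
      then show ?thesis by blast
    next
      case False
      have v3p: "(u + 3) mod p < p" using p0 by simp
      have "(u + 3) mod p \<notin> S2'" using False v3 t2 by auto
      then have "dv (y ((u + 3) mod p))" using sy v3p by blast
      then have yv: "dv (z2 ((u + 1) mod p))" unfolding y_def sh_def idx3 .
      have bv: "dv (b ((u + 3) mod p))" using bU v3 v3p by blast
      have L3: "dv (w^2 * z1 u - b u)"
        by (rule dvlin[OF PI[OF R up, of c] yv bv dvd_0_right dvd_0_right dvd_0_right dvd_0_right,
          where ka=1 and kb="-w" and kc="-1" and kd=0 and ke=0 and kf=0 and kg=0])
          (simp add: z1_def z2_def algebra_simps)
      have "dv (mom p 2 b * (int u - int t1 - 3 + 3 * w))"
        by (rule dvlin[OF LB[OF u] LZ[OF u] L3 G1 wr dvd_0_right dvd_0_right,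
          where ka="-(int u - int t1)" and kb="w^2" and kc="-(int u - int t1) * Q u" and kd="w^2"
            and ke="3 * mom p 2 b * (1 - w) * (w - 1)" and kf=0 and kg=0])
          (simp add: algebra_simps power2_eq_square power3_eq_cube)
      then show ?thesis using dv_mult mu by blast
    qed
  qed
  have h2: "\<forall>u\<in>U. (u + (p - 3)) mod p \<notin> U \<longrightarrow> (dv (int u - int t1 - 3) \<or> dv (int u - int t1 - 2 + 3 * w))"
  proof (intro ballI impI)
    fix u assume u: "u \<in> U" and r3: "(u + (p - 3)) mod p \<notin> U"
    have up: "u < p" using u fU by auto
    define r where "r = (u + (p - 3)) mod p"
    have rp: "r < p" using p0 r_def by simp
    show "dv (int u - int t1 - 3) \<or> dv (int u - int t1 - 2 + 3 * w)"
    proof (cases "r = t1")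
      case True
      have "dv (int u - int t1 - 3)"
        by (rule dvlin[OF modcm3[of u] dvd_0_right dvd_0_right dvd_0_right dvd_0_right dvd_0_right dvd_0_right,
          where ka="-1" and kb=0 and kc=0 and kd=0 and ke=0 and kf=0 and kg=0]) (simp add: True[symmetric] r_def algebra_simps)
      then show ?thesis by blast
    next
      case False
      have "r \<notin> S1" using False r3 t1 r_def by auto
      then have zr: "dv (z1 r)" using sz1 rp by blast
      have br: "dv (b r)" using bU r3 rp r_def by blast
      have e1': "(r + 1) mod p = (u + (p - 2)) mod p" unfolding r_def by (rule idx4)
      have e2': "(r + 3) mod p = u" unfolding r_def by (rule idx5[OF up])
      have PIr: "dv (w^2 * z1 r + w * y u - (b r - b u))"
        using PI[OF R rp, of c] unfolding e1' e2' by (simp add: z1_def z2_def y_def sh_def)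
      have L3: "dv (w * y u + b u)"
        by (rule dvlin[OF PIr zr br dvd_0_right dvd_0_right dvd_0_right dvd_0_right,
          where ka=1 and kb="-(w^2)" and kc=1 and kd=0 and ke=0 and kf=0 and kg=0])
          (simp add: algebra_simps)
      have "dv (mom p 2 b * (int u - int t1 - 2 + 3 * w))"
        by (rule dvlin[OF LB[OF u] L3 LY[OF u] M G1 Tt wr,
          where ka="-(int u - int t2)" and kb="(int u - int t2) * Q u" and kc="-w" and kd="-w"
            and ke="w" and kf="- mom p 2 b" and kg="3 * mom p 2 b * (2 - w)"])
          (simp add: algebra_simps power2_eq_square power3_eq_cube)
      then show ?thesis using dv_mult mu by blast
    qed
  qed
  show False
  proof (rule comb[OF fU(2) cU h1 h2])
    show "\<forall>u v. (dv (int u - int t1 - 3 + 3 * w) \<or> dv (int u - int t1 - 5)) \<longrightarrow>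
      (dv (int v - int t1 - 3) \<or> dv (int v - int t1 - 2 + 3 * w)) \<longrightarrow>
      \<not> dv (int u - int v) \<and> \<not> dv (int u - int v - 3) \<and> \<not> dv (int u - int v - 6)"
      using sep by blast
  qed
qed

end


context cf begin

definition nzf :: "(nat \<Rightarrow> int) \<Rightarrow> bool" where "nzf f = (\<exists>r<p. \<not> dv (f r))"

lemma TTset_fin: "finite {r. r < p \<and> P r}" by auto

lemma TT_ge1: "card (supp p f) \<le> TT f g"
  unfolding TT_def supp_def by (rule card_mono) auto

lemma TT_ge2: "card (supp p g) \<le> TT f g"
proof -
  have "card ((\<lambda>s. (s + (p - 1)) mod p) ` supp p g) = card (supp p g)"
  proof (rule card_image, rule inj_onI)
    fix x y assume xy: "x \<in> supp p g" "y \<in> supp p g" and e: "(x + (p - 1)) mod p = (y + (p - 1)) mod p"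
    have lt: "x < p" "y < p" using xy unfolding supp_def by auto
    have "((x + (p - 1)) mod p + 1) mod p = ((y + (p - 1)) mod p + 1) mod p" using e by simp
    then show "x = y" using idx7[OF lt(1)] idx7[OF lt(2)] by metis
  qed
  moreover have sub: "(\<lambda>s. (s + (p - 1)) mod p) ` supp p g \<subseteq> {r. r < p \<and> (\<not> dv (f r) \<or> \<not> dv (g ((r + 1) mod p)))}"
  proof
    fix r assume "r \<in> (\<lambda>s. (s + (p - 1)) mod p) ` supp p g"
    then obtain s where s: "s \<in> supp p g" "r = (s + (p - 1)) mod p" by blast
    have "s < p" "\<not> dv (g s)" using s(1) unfolding supp_def by auto
    moreover have "(r + 1) mod p = s" using s(2) idx7[OF \<open>s < p\<close>] by simp
    ultimately show "r \<in> {r. r < p \<and> (\<not> dv (f r) \<or> \<not> dv (g ((r + 1) mod p)))}"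
      using s(2) p0 by simp
  qed
  moreover have "finite {r. r < p \<and> (\<not> dv (f r) \<or> \<not> dv (g ((r + 1) mod p)))}" by simp
  ultimately show ?thesis unfolding TT_def using card_mono by (metis (no_types, lifting))
qed

lemma TT_ge3: "card (supp p (zf f g)) \<le> TT f g"
  unfolding TT_def supp_def zf_def by (rule card_mono) (auto simp: dvd_diff)

lemma wt_ge: "Hm p m f \<Longrightarrow> nzf f \<Longrightarrow> m + 1 \<le> card (supp p f)"
  unfolding nzf_def using MDS[OF pr] by blast

lemma zero_mom: "\<not> nzf f \<Longrightarrow> dv (mom p j f)"
  unfolding nzf_def using pw_mom by blast

lemma caseZ:
  assumes C: "cond a b c" and m: "dv (mom p 2 a)" and nz: "nzf a"
  shows "12 \<le> TT a b + TT b c + TT c a"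
proof -
  from C have H: "Hm p 2 a" "Hm p 2 b" "Hm p 2 c"
    and e4: "dv (mom p 2 b - w * mom p 2 a)" and e5: "dv (mom p 2 c - w * mom p 2 b)"
    and e3: "dv (mom p 3 a + mom p 3 b + mom p 3 c)" and f3: "dv (mom p 4 a + mom p 4 b + mom p 4 c)"
    unfolding cond_def by auto
  have mb: "dv (mom p 2 b)"
    by (rule dvlin[OF e4 m dvd_0_right dvd_0_right dvd_0_right dvd_0_right dvd_0_right,
      where ka=1 and kb=w and kc=0 and kd=0 and ke=0 and kf=0 and kg=0]) simp
  have mc: "dv (mom p 2 c)"
    by (rule dvlin[OF e5 mb dvd_0_right dvd_0_right dvd_0_right dvd_0_right dvd_0_right,
      where ka=1 and kb=w and kc=0 and kd=0 and ke=0 and kf=0 and kg=0]) simp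
  have H3: "Hm p 3 a" "Hm p 3 b" "Hm p 3 c" using H m mb mc by (auto simp: Hm_simps)
  have a4: "4 \<le> card (supp p a)" using wt_ge[OF H3(1) nz] by simp
  show ?thesis
  proof (cases "nzf b \<or> nzf c")
    case True
    then have "4 \<le> TT b c"
      using wt_ge[OF H3(2)] wt_ge[OF H3(3)] TT_ge1[of b c] TT_ge2[of c b] by fastforce
    moreover have "4 \<le> TT a b" "4 \<le> TT c a" using a4 TT_ge1[of a b] TT_ge2[of a c] by auto
    ultimately show ?thesis by simp
  next
    case False
    have zb: "dv (mom p 3 b)" "dv (mom p 4 b)" and zc: "dv (mom p 3 c)" "dv (mom p 4 c)"
      using zero_mom False by auto
    have "dv (mom p 3 a)"
      by (rule dvlin[OF e3 zb(1) zc(1) dvd_0_right dvd_0_right dvd_0_right dvd_0_right,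
        where ka=1 and kb="-1" and kc="-1" and kd=0 and ke=0 and kf=0 and kg=0]) simp
    moreover have "dv (mom p 4 a)"
      by (rule dvlin[OF f3 zb(2) zc(2) dvd_0_right dvd_0_right dvd_0_right dvd_0_right,
        where ka=1 and kb="-1" and kc="-1" and kd=0 and ke=0 and kf=0 and kg=0]) simp
    ultimately have "Hm p 5 a" using H3(1) by (simp add: Hm_simps)
    then have "6 \<le> card (supp p a)" using wt_ge[OF _ nz] by fastforce
    then show ?thesis using TT_ge1[of a b] TT_ge2[of a c] by simp
  qed
qed

lemma nz_of_mom: "\<not> dv (mom p j f) \<Longrightarrow> nzf f"
  using zero_mom by blast

lemma z_nz: "\<not> RR a b \<Longrightarrow> nzf (zf a b)"
  unfolding RR_def nzf_def by blast

lemma OneR: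
  assumes C: "cond a b c" and R: "RR a b" and R2: "\<not> RR b c" and R3: "\<not> RR c a"
    and mu: "\<not> dv (mom p 2 b)"
  shows "12 \<le> TT a b + TT b c + TT c a"
proof -
  from C have H: "Hm p 2 a" "Hm p 2 b" "Hm p 2 c"
    and e5: "dv (mom p 2 c - w * mom p 2 b)" and e7: "dv (mom p 2 a - w * mom p 2 c)"
    unfolding cond_def by auto
  have t2: "4 \<le> TT b c" using wt_ge[OF zH3[OF H(2,3) e5] z_nz[OF R2]] TT_ge3[of b c] by simp
  have t3: "4 \<le> TT c a" using wt_ge[OF zH3[OF H(3,1) e7] z_nz[OF R3]] TT_ge3[of c a] by simp
  have b3: "3 \<le> card (supp p b)" using wt_ge[OF H(2) nz_of_mom[OF mu]] by simp
  have t1: "card (supp p b) \<le> TT a b" by (rule TT_ge2)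
  show ?thesis
  proof (rule ccontr)
    assume "\<not> ?thesis"
    then have "card (supp p b) = 3" "TT b c = 4" "TT c a = 4" using t1 t2 t3 b3 by auto
    then show False using geom[OF C R mu] by blast
  qed
qed

lemma core:
  assumes C: "cond a b c" and nz: "nzf a \<or> nzf b \<or> nzf c"
  shows "12 \<le> TT a b + TT b c + TT c a"
proof -
  from C have H: "Hm p 2 a" "Hm p 2 b" "Hm p 2 c"
    and e4: "dv (mom p 2 b - w * mom p 2 a)" and e5: "dv (mom p 2 c - w * mom p 2 b)"
    and e7: "dv (mom p 2 a - w * mom p 2 c)"
    unfolding cond_def by auto
  have C2: "cond b c a" using cond_rot[OF C] .
  have C3: "cond c a b" using cond_rot[OF C2] .
  have imp1: "dv (mom p 2 b)" if "dv (mom p 2 a)"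
    by (rule dvlin[OF e4 that dvd_0_right dvd_0_right dvd_0_right dvd_0_right dvd_0_right,
      where ka=1 and kb=w and kc=0 and kd=0 and ke=0 and kf=0 and kg=0]) simp
  have imp2: "dv (mom p 2 c)" if "dv (mom p 2 b)"
    by (rule dvlin[OF e5 that dvd_0_right dvd_0_right dvd_0_right dvd_0_right dvd_0_right,
      where ka=1 and kb=w and kc=0 and kd=0 and ke=0 and kf=0 and kg=0]) simp
  have imp3: "dv (mom p 2 a)" if "dv (mom p 2 c)"
    by (rule dvlin[OF e7 that dvd_0_right dvd_0_right dvd_0_right dvd_0_right dvd_0_right,
      where ka=1 and kb=w and kc=0 and kd=0 and ke=0 and kf=0 and kg=0]) simp
  show ?thesis
  proof (cases "dv (mom p 2 a)")
    case True
    then have mb: "dv (mom p 2 b)" and mc: "dv (mom p 2 c)" using imp1 imp2 by auto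
    from nz show ?thesis
    proof (elim disjE)
      assume "nzf a" then show ?thesis using caseZ[OF C True] by simp
    next
      assume "nzf b" then show ?thesis using caseZ[OF C2 mb] by simp
    next
      assume "nzf c" then show ?thesis using caseZ[OF C3 mc] by simp
    qed
  next
    case False
    then have mc: "\<not> dv (mom p 2 c)" and mb: "\<not> dv (mom p 2 b)" using imp3 imp2 by auto
    have n12: "\<not> (RR a b \<and> RR b c)" using K2[OF C] mc by blast
    have n23: "\<not> (RR b c \<and> RR c a)" using K2[OF C2] False by blast
    have n31: "\<not> (RR c a \<and> RR a b)" using K2[OF C3] mb by blast
    consider "RR a b" | "RR b c" | "RR c a" | "\<not> RR a b \<and> \<not> RR b c \<and> \<not> RR c a" by blast
    then show ?thesis
    proof cases
      case 1 then show ?thesis using OneR[OF C 1 _ _ mb] n12 n31 by blast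
    next
      case 2 then show ?thesis using OneR[OF C2 2 _ _ mc] n23 n12 by simp
    next
      case 3 then show ?thesis using OneR[OF C3 3 _ _ False] n31 n23 by simp
    next
      case 4
      have "4 \<le> TT a b" using wt_ge[OF zH3[OF H(1,2) e4] z_nz] TT_ge3[of a b] 4 by fastforce
      moreover have "4 \<le> TT b c" using wt_ge[OF zH3[OF H(2,3) e5] z_nz] TT_ge3[of b c] 4 by fastforce
      moreover have "4 \<le> TT c a" using wt_ge[OF zH3[OF H(3,1) e7] z_nz] TT_ge3[of c a] 4 by fastforce
      ultimately show ?thesis by simp
    qed
  qed
qed

end



locale cf3 = cf +
  assumes p1: "p mod 3 = 1"
begin

definition idx :: "nat \<Rightarrow> nat \<Rightarrow> nat" where
  "idx i r = r + p * ((i + 2 * r) mod 3)"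

lemma idx_lt: "r < p \<Longrightarrow> idx i r < 3 * p"
proof -
  assume r: "r < p"
  have "(i + 2 * r) mod 3 \<le> 2" by simp
  then have a: "p * ((i + 2 * r) mod 3) \<le> p * 2" by (rule mult_left_mono) simp
  show ?thesis unfolding idx_def using a r by linarith
qed

lemma idx_modp: "r < p \<Longrightarrow> idx i r mod p = r"
  unfolding idx_def by simp

lemma idx_mod3: "i < 3 \<Longrightarrow> idx i r mod 3 = i"
proof -
  assume i: "i < 3"
  have "idx i r mod 3 = (r + (p mod 3) * ((i + 2 * r) mod 3)) mod 3"
    unfolding idx_def by (metis mod_add_right_eq mod_mult_left_eq mod_mult_right_eq mult.commute)
  also have "\<dots> = (r + (i + 2 * r) mod 3) mod 3" using p1 by simp
  also have "\<dots> = (r + (i + 2 * r)) mod 3" by (simp add: mod_add_right_eq)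
  also have "\<dots> = (i + 3 * r) mod 3" by (simp add: algebra_simps)
  also have "\<dots> = i" using i by simp
  finally show ?thesis .
qed

lemma crt_uniq:
  assumes "x < 3 * p" "y < 3 * p" "x mod 3 = y mod 3" "x mod p = y mod p"
  shows "x = y"
proof -
  have d3: "(3::int) dvd int x - int y"
    using assms(3) by (metis mod_eq_dvd_iff of_nat_mod of_nat_numeral)
  have dp: "int p dvd int x - int y"
    using assms(4) by (metis mod_eq_dvd_iff of_nat_mod)
  have cop: "coprime (int p) 3" using prime_imp_coprime[OF prI nd(3)] .
  have "int p * 3 dvd int x - int y" by (rule divides_mult[OF dp d3 cop])
  show ?thesis
  proof (rule ccontr)
    assume "x \<noteq> y"
    then have "int x - int y \<noteq> 0" by simp
    from dvd_imp_le_int[OF this \<open>int p * 3 dvd int x - int y\<close>] assms(1,2) show False by simp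
  qed
qed

lemma idx_surj: "n < 3 * p \<Longrightarrow> idx (n mod 3) (n mod p) = n"
  by (rule crt_uniq) (simp_all add: idx_lt idx_mod3 idx_modp p0)

lemma idx_inj: "i < 3 \<Longrightarrow> j < 3 \<Longrightarrow> r < p \<Longrightarrow> s < p \<Longrightarrow> idx i r = idx j s \<Longrightarrow> i = j \<and> r = s"
  by (metis idx_mod3 idx_modp)

lemma idx_succ: "i < 3 \<Longrightarrow> r < p \<Longrightarrow> (idx i r + 1) mod (3 * p) = idx ((i + 1) mod 3) ((r + 1) mod p)"
proof -
  assume i: "i < 3" and r: "r < p"
  have lt: "(idx i r + 1) mod (3 * p) < 3 * p" using p0 by simp
  have m3: "((idx i r + 1) mod (3 * p)) mod 3 = (i + 1) mod 3"
    by (metis i idx_mod3 mod_add_left_eq mod_mod_cancel dvd_triv_left)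
  have mp: "((idx i r + 1) mod (3 * p)) mod p = (r + 1) mod p"
    by (metis r idx_modp mod_add_left_eq mod_mod_cancel dvd_triv_right)
  show ?thesis
  proof (rule crt_uniq[OF lt])
    show "idx ((i + 1) mod 3) ((r + 1) mod p) < 3 * p" using idx_lt p0 by simp
    show "(idx i r + 1) mod (3 * p) mod 3 = idx ((i + 1) mod 3) ((r + 1) mod p) mod 3"
      unfolding m3 by (simp add: idx_mod3)
    show "(idx i r + 1) mod (3 * p) mod p = idx ((i + 1) mod 3) ((r + 1) mod p) mod p"
      unfolding mp using p0 by (simp add: idx_modp)
  qed
qed

end


context cf3 begin

definition cls :: "nat list \<Rightarrow> nat \<Rightarrow> nat \<Rightarrow> int" where
  "cls xs i = (\<lambda>r. int (xs ! idx i r))"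

definition WW :: "nat list \<Rightarrow> nat list \<Rightarrow> nat \<Rightarrow> nat \<Rightarrow> int" where
  "WW x y i = (\<lambda>r. cls x i r - cls y i r)"

definition phiL :: "(nat \<times> nat \<times> int) list \<Rightarrow> (nat \<Rightarrow> (nat \<Rightarrow> int)) \<Rightarrow> int" where
  "phiL L F = sum_list (map (\<lambda>(i, j, k). k * mom p j (F i)) L)"

definition LL :: "(nat \<times> nat \<times> int) list list" where
  "LL = [[(0,0,1)],[(0,1,1)],[(1,0,1)],[(1,1,1)],[(2,0,1)],[(2,1,1)],
         [(1,2,1),(0,2,-w)],[(2,2,1),(1,2,-w)],[(0,3,1),(1,3,1),(2,3,1)],[(0,4,1),(1,4,1),(2,4,1)]]"

definition thecode :: "nat list set" where
  "thecode = {xs \<in> vecs p (3 * p). \<forall>L\<in>set LL. dv (phiL L (cls xs))}"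

lemma mom_diff: "mom p j (\<lambda>r. f r - g r) = mom p j f - mom p j g"
  unfolding mom_def by (simp add: sum_subtractf algebra_simps)

lemma phiL_diff: "phiL L (cls x) - phiL L (cls y) = phiL L (WW x y)"
  unfolding phiL_def WW_def
  by (induction L) (auto simp: mom_diff algebra_simps)

lemma thecode_cond:
  assumes "x \<in> thecode" "y \<in> thecode"
  shows "cond (WW x y 0) (WW x y 1) (WW x y 2)"
proof -
  have d: "\<forall>L\<in>set LL. dv (phiL L (WW x y))"
  proof
    fix L assume L: "L \<in> set LL"
    have "dv (phiL L (cls x) - phiL L (cls y))" using assms L unfolding thecode_def by (auto intro: dvd_diff)
    then show "dv (phiL L (WW x y))" unfolding phiL_diff .
  qed
  then have h: "dv (mom p 0 (WW x y 0))" "dv (mom p 1 (WW x y 0))" "dv (mom p 0 (WW x y 1))"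
     "dv (mom p 1 (WW x y 1))" "dv (mom p 0 (WW x y 2))" "dv (mom p 1 (WW x y 2))"
     "dv (mom p 2 (WW x y 1) - w * mom p 2 (WW x y 0))"
     "dv (mom p 2 (WW x y 2) - w * mom p 2 (WW x y 1))"
     "dv (mom p 3 (WW x y 0) + mom p 3 (WW x y 1) + mom p 3 (WW x y 2))"
     "dv (mom p 4 (WW x y 0) + mom p 4 (WW x y 1) + mom p 4 (WW x y 2))"
    unfolding LL_def phiL_def by (simp_all add: algebra_simps)
  have h3: "dv (mom p 2 (WW x y 0) - w * mom p 2 (WW x y 2))"
    by (rule dvlin[OF h(8) h(7) w3 dvd_0_right dvd_0_right dvd_0_right dvd_0_right,
      where ka="-w" and kb="-(w^2)" and kc="- mom p 2 (WW x y 0)" and kd=0 and ke=0 and kf=0 and kg=0])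
      (simp add: algebra_simps power2_eq_square power3_eq_cube)
  show ?thesis unfolding cond_def using h h3 by (simp add: Hm_simps)
qed

lemma pd_bound:
  assumes x: "x \<in> vecs p (3 * p)" and y: "y \<in> vecs p (3 * p)"
  shows "TT (WW x y 0) (WW x y 1) + TT (WW x y 1) (WW x y 2) + TT (WW x y 2) (WW x y 0) \<le> pair_dist x y"
proof -
  have lx: "length x = 3 * p" using x unfolding vecs_def by simp
  define Pset where "Pset = {n \<in> {0..<3 * p}. (x ! n, x ! ((n + 1) mod (3 * p))) \<noteq> (y ! n, y ! ((n + 1) mod (3 * p)))}"
  have pd: "pair_dist x y = card Pset" unfolding pair_dist_def Pset_def Let_def lx ..
  define S where "S = (\<lambda>i. {r. r < p \<and> (\<not> dv (WW x y i r) \<or> \<not> dv (WW x y ((i + 1) mod 3) ((r + 1) mod p)))})"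
  have T0: "TT (WW x y 0) (WW x y 1) = card (S 0)" unfolding TT_def S_def by simp
  have T1: "TT (WW x y 1) (WW x y 2) = card (S 1)" unfolding TT_def S_def by (simp add: numeral_2_eq_2)
  have T2: "TT (WW x y 2) (WW x y 0) = card (S 2)" unfolding TT_def S_def by simp
  have key: "idx i r \<in> Pset" if i: "i < 3" and r: "r \<in> S i" for i r
  proof -
    have rp: "r < p" using r unfolding S_def by simp
    have "(\<not> dv (WW x y i r) \<or> \<not> dv (WW x y ((i + 1) mod 3) ((r + 1) mod p)))" using r unfolding S_def by simp
    then have "x ! idx i r \<noteq> y ! idx i r \<or> x ! idx ((i + 1) mod 3) ((r + 1) mod p) \<noteq> y ! idx ((i + 1) mod 3) ((r + 1) mod p)"
      unfolding WW_def cls_def by auto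
    then have "(x ! idx i r, x ! ((idx i r + 1) mod (3 * p))) \<noteq> (y ! idx i r, y ! ((idx i r + 1) mod (3 * p)))"
      using idx_succ[OF i rp] by auto
    then show ?thesis unfolding Pset_def using idx_lt[OF rp] by simp
  qed
  have inj: "inj_on (idx i) (S i)" if "i < 3" for i
    by (rule inj_onI) (use that idx_inj in \<open>auto simp: S_def\<close>)
  have fin: "finite (S i)" for i unfolding S_def by simp
  have disj: "idx i ` S i \<inter> idx j ` S j = {}" if "i < 3" "j < 3" "i \<noteq> j" for i j
  proof (rule equals0I)
    fix n assume "n \<in> idx i ` S i \<inter> idx j ` S j"
    then obtain r s where "n = idx i r" "n = idx j s" by blast
    then have "i = j" using idx_mod3[OF that(1), of r] idx_mod3[OF that(2), of s] by simp
    then show False using that(3) by simp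
  qed
  have c01: "card (idx 0 ` S 0 \<union> idx 1 ` S 1) = card (S 0) + card (S 1)"
    using card_Un_disjoint[of "idx 0 ` S 0" "idx 1 ` S 1"] fin disj[of 0 1] card_image[OF inj[of 0]] card_image[OF inj[of 1]]
    by simp
  have c012: "card (idx 0 ` S 0 \<union> idx 1 ` S 1 \<union> idx 2 ` S 2) = card (S 0) + card (S 1) + card (S 2)"
  proof -
    have "(idx 0 ` S 0 \<union> idx 1 ` S 1) \<inter> idx 2 ` S 2 = {}" using disj[of 0 2] disj[of 1 2] by auto
    then show ?thesis
      using card_Un_disjoint[of "idx 0 ` S 0 \<union> idx 1 ` S 1" "idx 2 ` S 2"] fin c01 card_image[OF inj[of 2]]
      by simp
  qed
  have sub: "idx 0 ` S 0 \<union> idx 1 ` S 1 \<union> idx 2 ` S 2 \<subseteq> Pset" using key by auto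
  have "finite Pset" unfolding Pset_def by simp
  from card_mono[OF this sub] c012 pd T0 T1 T2 show ?thesis by simp
qed

lemma nz_diff:
  assumes x: "x \<in> vecs p (3 * p)" and y: "y \<in> vecs p (3 * p)" and ne: "x \<noteq> y"
  shows "nzf (WW x y 0) \<or> nzf (WW x y 1) \<or> nzf (WW x y 2)"
proof -
  have lx: "length x = 3 * p" "length y = 3 * p" using x y unfolding vecs_def by auto
  obtain n where n: "n < 3 * p" "x ! n \<noteq> y ! n" using ne lx nth_equalityI by metis
  have xs: "x ! n < p" "y ! n < p" using x y n(1) lx unfolding vecs_def by (auto simp: subset_iff)
  define i where "i = n mod 3"
  define r where "r = n mod p"
  have ir: "i < 3" "r < p" using p0 i_def r_def by auto
  have e: "idx i r = n" using idx_surj[OF n(1)] i_def r_def by simp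
  have "\<not> dv (WW x y i r)"
  proof
    assume "dv (WW x y i r)"
    then have "dv (int (x ! n) - int (y ! n))" unfolding WW_def cls_def e .
    then have "x ! n = y ! n" using res_eq xs by blast
    then show False using n(2) by simp
  qed
  then have "nzf (WW x y i)" unfolding nzf_def using ir by blast
  moreover have "i = 0 \<or> i = 1 \<or> i = 2" using ir(1) by arith
  ultimately show ?thesis by auto
qed

lemma dist12:
  assumes "x \<in> thecode" "y \<in> thecode" "x \<noteq> y"
  shows "12 \<le> pair_dist x y"
proof -
  have v: "x \<in> vecs p (3 * p)" "y \<in> vecs p (3 * p)" using assms unfolding thecode_def by auto
  show ?thesis using core[OF thecode_cond[OF assms(1,2)] nz_diff[OF v assms(3)]] pd_bound[OF v] by linarith
qed

end



lemma card_vecs: "card (vecs p n) = p ^ n"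
proof -
  have "vecs p n = {xs. set xs \<subseteq> {0..<p} \<and> length xs = n}" unfolding vecs_def by auto
  then show ?thesis using card_lists_length_eq[of "{0..<p}" n] by simp
qed

lemma finite_vecs: "finite (vecs p n)"
proof -
  have "vecs p n = {xs. set xs \<subseteq> {0..<p} \<and> length xs = n}" unfolding vecs_def by auto
  then show ?thesis using finite_lists_length_eq[of "{0..<p}" n] by simp
qed

context cf3 begin

definition sb :: "nat list \<Rightarrow> nat list \<Rightarrow> nat list" where
  "sb x y = map (\<lambda>k. (x ! k + p - y ! k) mod p) [0..<length x]"

lemma sb_vecs: "x \<in> vecs p n \<Longrightarrow> sb x y \<in> vecs p n"
  unfolding vecs_def sb_def using p0 by auto

lemma sb_nth: "k < length x \<Longrightarrow> sb x y ! k = (x ! k + p - y ! k) mod p"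
  unfolding sb_def by simp

lemma sb_cong: "y ! k < p \<Longrightarrow> dv (int ((a + p - y ! k) mod p) - (int a - int (y ! k)))"
proof -
  assume yk: "y ! k < p"
  have e1: "a + p - y ! k = a + (p - y ! k)" using yk by simp
  have e2: "int (p - y ! k) = int p - int (y ! k)" using yk by simp
  have h0: "dv (int ((a + (p - y ! k)) mod p) - (int a + int (p - y ! k)))" by (rule modc[OF p0])
  have "dv (int ((a + (p - y ! k)) mod p) - (int a - int (y ! k)))"
    by (rule dvd_eqI[OF dvd_add[OF h0 dvd_refl]]) (use e2 in linarith)
  then show ?thesis unfolding e1 .
qed

lemma sb_inj:
  assumes "x \<in> vecs p n" "y \<in> vecs p n" "z \<in> vecs p n" "sb x z = sb y z"
  shows "x = y"
proof (rule nth_equalityI)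
  show "length x = length y" using assms unfolding vecs_def by simp
  fix k assume k: "k < length x"
  have lens: "length x = n" "length y = n" "length z = n" using assms unfolding vecs_def by auto
  have lt: "x ! k < p" "y ! k < p" "z ! k < p" using assms k lens unfolding vecs_def by (auto simp: subset_iff)
  have "sb x z ! k = sb y z ! k" using assms(4) by simp
  moreover have "sb x z ! k = (x ! k + p - z ! k) mod p" by (rule sb_nth[OF k])
  moreover have "sb y z ! k = (y ! k + p - z ! k) mod p" by (rule sb_nth) (use k lens in simp)
  ultimately have e: "(x ! k + p - z ! k) mod p = (y ! k + p - z ! k) mod p" by simp
  have h1: "dv (int ((x ! k + p - z ! k) mod p) - (int (x ! k) - int (z ! k)))" by (rule sb_cong[OF lt(3)])
  have h2: "dv (int ((y ! k + p - z ! k) mod p) - (int (y ! k) - int (z ! k)))" by (rule sb_cong[OF lt(3)])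
  have "dv (int (x ! k) - int (y ! k))"
    by (rule dvd_eqI[OF dvd_diff[OF h2 h1]]) (simp add: e)
  then show "x ! k = y ! k" by (rule res_eq[OF lt(1,2)])
qed

lemma mom_cong:
  assumes "\<forall>r<p. dv (f r - g r)"
  shows "dv (mom p j f - mom p j g)"
proof -
  have "mom p j f - mom p j g = (\<Sum>r<p. (f r - g r) * int r ^ j)"
    unfolding mom_def by (simp add: sum_subtractf left_diff_distrib)
  moreover have "dv (\<Sum>r<p. (f r - g r) * int r ^ j)"
    by (rule dvd_sum) (use assms in simp)
  ultimately show ?thesis by simp
qed

lemma phiL_cong: "(\<And>i j. dv (mom p j (F i) - mom p j (G i))) \<Longrightarrow> dv (phiL L F - phiL L G)"
proof (induction L)
  case Nil then show ?case by (simp add: phiL_def)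
next
  case (Cons a L)
  obtain i j k where a: "a = (i, j, k)" by (cases a) auto
  have "phiL (a # L) F - phiL (a # L) G = k * (mom p j (F i) - mom p j (G i)) + (phiL L F - phiL L G)"
    unfolding phiL_def a by (simp add: algebra_simps)
  then show ?case using Cons by (simp add: dvd_add)
qed

lemma sb_add:
  assumes "x \<in> vecs p (3 * p)" "y \<in> vecs p (3 * p)"
  shows "dv (phiL L (cls (sb x y)) - (phiL L (cls x) - phiL L (cls y)))"
proof -
  have lens: "length x = 3 * p" "length y = 3 * p" using assms unfolding vecs_def by auto
  have "dv (mom p j (cls (sb x y) i) - mom p j (WW x y i))" for i j
  proof (rule mom_cong, intro allI impI)
    fix r assume r: "r < p"
    have n: "idx i r < length x" "y ! idx i r < p" using idx_lt[OF r] lens assms(2) unfolding vecs_def by (auto simp: subset_iff)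
    show "dv (cls (sb x y) i r - WW x y i r)"
      unfolding cls_def WW_def sb_nth[OF n(1)] using sb_cong[OF n(2)] by simp
  qed
  then have "dv (phiL L (cls (sb x y)) - phiL L (WW x y))" by (rule phiL_cong)
  then show ?thesis unfolding phiL_diff .
qed

end


context cf3 begin

lemma fiber:
  fixes \<phi> :: "nat list \<Rightarrow> int"
  assumes K: "K \<subseteq> vecs p N" and cl: "\<forall>x\<in>K. \<forall>y\<in>K. sb x y \<in> K"
   and add: "\<forall>x\<in>K. \<forall>y\<in>K. dv (\<phi> (sb x y) - (\<phi> x - \<phi> y))"
  shows "card K \<le> p * card {x\<in>K. dv (\<phi> x)}"
proof -
  define Z where "Z = {x\<in>K. dv (\<phi> x)}"
  define F where "F = (\<lambda>v::nat. {x\<in>K. \<phi> x mod int p = int v})"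
  have fK: "finite K" using K finite_vecs finite_subset by blast
  have fZ: "finite Z" using fK Z_def by simp
  have KU: "K \<subseteq> (\<Union>v\<in>{..<p}. F v)"
  proof
    fix x assume x: "x \<in> K"
    define v where "v = nat (\<phi> x mod int p)"
    have "0 \<le> \<phi> x mod int p" "\<phi> x mod int p < int p" using p0 by auto
    then have iv: "int v = \<phi> x mod int p" "v < p" unfolding v_def by auto
    then have "x \<in> F v" using x unfolding F_def by simp
    then show "x \<in> (\<Union>v\<in>{..<p}. F v)" using iv(2) by blast
  qed
  have cF: "card (F v) \<le> card Z" for v
  proof (cases "F v = {}")
    case True then show ?thesis by simp
  next
    case False
    then obtain x0 where x0: "x0 \<in> F v" by blast
    have x0K: "x0 \<in> K" using x0 F_def by simp
    have inj: "inj_on (\<lambda>x. sb x x0) (F v)"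
    proof (rule inj_onI)
      fix x y assume "x \<in> F v" "y \<in> F v" "sb x x0 = sb y x0"
      then show "x = y" using sb_inj[of x N y x0] K x0K unfolding F_def by auto
    qed
    have img: "(\<lambda>x. sb x x0) ` F v \<subseteq> Z"
    proof
      fix z assume "z \<in> (\<lambda>x. sb x x0) ` F v"
      then obtain x where x: "x \<in> F v" "z = sb x x0" by blast
      have xK: "x \<in> K" using x F_def by simp
      have "\<phi> x mod int p = \<phi> x0 mod int p" using x(1) x0 unfolding F_def by simp
      then have d: "dv (\<phi> x - \<phi> x0)" by (simp add: mod_eq_dvd_iff)
      have "dv (\<phi> (sb x x0))"
        by (rule dvd_eqI[OF dvd_add[OF bspec[OF bspec[OF add xK] x0K] d]]) simp
      then show "z \<in> Z" unfolding Z_def using cl xK x0K x(2) by auto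
    qed
    show ?thesis using card_inj_on_le[OF inj img fZ] .
  qed
  have "card K \<le> card (\<Union>v\<in>{..<p}. F v)"
    by (rule card_mono[OF _ KU]) (auto simp: F_def fK)
  also have "\<dots> \<le> (\<Sum>v<p. card (F v))" by (rule card_UN_le) simp
  also have "\<dots> \<le> (\<Sum>v<p. card Z)" by (rule sum_mono) (rule cF)
  also have "\<dots> = p * card Z" by simp
  finally show ?thesis unfolding Z_def .
qed

lemma count_ge: "p ^ (3 * p) \<le> card {xs \<in> vecs p (3 * p). \<forall>L\<in>set Ls. dv (phiL L (cls xs))} * p ^ (length Ls)"
proof (induction Ls)
  case Nil
  then show ?case using card_vecs[of p "3 * p"] by simp
next
  case (Cons L Ls)
  define K where "K = {xs \<in> vecs p (3 * p). \<forall>L\<in>set Ls. dv (phiL L (cls xs))}"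
  have Ksub: "K \<subseteq> vecs p (3 * p)" unfolding K_def by auto
  have cl: "\<forall>x\<in>K. \<forall>y\<in>K. sb x y \<in> K"
  proof (intro ballI)
    fix x y assume x: "x \<in> K" and y: "y \<in> K"
    have v: "x \<in> vecs p (3 * p)" "y \<in> vecs p (3 * p)" using x y K_def by auto
    have "dv (phiL L' (cls (sb x y)))" if L': "L' \<in> set Ls" for L'
    proof -
      have "dv (phiL L' (cls x))" "dv (phiL L' (cls y))" using x y L' K_def by auto
      then have "dv (phiL L' (cls x) - phiL L' (cls y))" by (rule dvd_diff)
      from dvd_add[OF sb_add[OF v, of L'] this] show ?thesis by simp
    qed
    then show "sb x y \<in> K" unfolding K_def using sb_vecs[OF v(1)] by auto
  qed
  have add: "\<forall>x\<in>K. \<forall>y\<in>K. dv (phiL L (cls (sb x y)) - (phiL L (cls x) - phiL L (cls y)))"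
    using sb_add Ksub by blast
  have "card K \<le> p * card {x\<in>K. dv (phiL L (cls x))}"
    by (rule fiber[OF Ksub cl add])
  moreover have "{x\<in>K. dv (phiL L (cls x))} = {xs \<in> vecs p (3 * p). \<forall>L\<in>set (L # Ls). dv (phiL L (cls xs))}"
    unfolding K_def by auto
  ultimately have c: "card K \<le> p * card {xs \<in> vecs p (3 * p). \<forall>L\<in>set (L # Ls). dv (phiL L (cls xs))}" by simp
  have "p ^ (3 * p) \<le> card K * p ^ length Ls" using Cons.IH unfolding K_def .
  also have "\<dots> \<le> (p * card {xs \<in> vecs p (3 * p). \<forall>L\<in>set (L # Ls). dv (phiL L (cls xs))}) * p ^ length Ls"
    by (rule mult_right_mono[OF c]) simp
  finally show ?case by (simp add: algebra_simps)
qed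

lemma pd_window:
  assumes x: "x \<in> vecs p (3 * p)" and y: "y \<in> vecs p (3 * p)" and d: "drop k x = drop k y" and k: "k < 3 * p"
  shows "pair_dist x y \<le> k + 1"
proof -
  have lx: "length x = 3 * p" "length y = 3 * p" using x y unfolding vecs_def by auto
  define Pset where "Pset = {n \<in> {0..<3 * p}. (x ! n, x ! ((n + 1) mod (3 * p))) \<noteq> (y ! n, y ! ((n + 1) mod (3 * p)))}"
  have pd: "pair_dist x y = card Pset" unfolding pair_dist_def Pset_def Let_def lx ..
  have eq: "x ! n = y ! n" if "k \<le> n" "n < 3 * p" for n
  proof -
    have "x ! n = drop k x ! (n - k)" using that lx by simp
    also have "\<dots> = drop k y ! (n - k)" using d by simp
    also have "\<dots> = y ! n" using that lx by simp
    finally show ?thesis .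
  qed
  have sub: "Pset \<subseteq> {..<k} \<union> {3 * p - 1}"
  proof
    fix n assume n: "n \<in> Pset"
    then have np: "n < 3 * p" unfolding Pset_def by simp
    have "x ! n \<noteq> y ! n \<or> x ! ((n + 1) mod (3 * p)) \<noteq> y ! ((n + 1) mod (3 * p))"
      using n unfolding Pset_def by auto
    then show "n \<in> {..<k} \<union> {3 * p - 1}"
    proof
      assume "x ! n \<noteq> y ! n" then have "n < k" using eq np by (meson not_le)
      then show ?thesis by simp
    next
      assume a: "x ! ((n + 1) mod (3 * p)) \<noteq> y ! ((n + 1) mod (3 * p))"
      show ?thesis
      proof (cases "n + 1 < 3 * p")
        case True
        then have "(n + 1) mod (3 * p) = n + 1" by simp
        then have "n + 1 < k" using a eq True by (metis not_le)
        then show ?thesis by simp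
      next
        case False then have "n = 3 * p - 1" using np by simp
        then show ?thesis by simp
      qed
    qed
  qed
  have "card Pset \<le> card ({..<k} \<union> {3 * p - 1})" by (rule card_mono[OF _ sub]) simp
  also have "\<dots> \<le> card {..<k} + card {3 * p - 1}" by (rule card_Un_le)
  finally show ?thesis using pd by simp
qed

end


context cf3 begin

lemma thecode_sub: "thecode \<subseteq> vecs p (3 * p)" unfolding thecode_def by auto

lemma thecode_fin: "finite thecode" using thecode_sub finite_vecs finite_subset by blast

lemma drop_vecs: "x \<in> vecs p n \<Longrightarrow> drop k x \<in> vecs p (n - k)"
  unfolding vecs_def using set_drop_subset by fastforce

lemma thecode_card: "card thecode = p ^ (3 * p - 10)"
proof (rule antisym)
  have inj: "inj_on (drop 10) thecode"
  proof (rule inj_onI, rule ccontr)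
    fix x y assume xy: "x \<in> thecode" "y \<in> thecode" "drop 10 x = drop 10 y" "x \<noteq> y"
    have "12 \<le> pair_dist x y" by (rule dist12[OF xy(1,2,4)])
    moreover have "pair_dist x y \<le> 10 + 1"
      by (rule pd_window[OF _ _ xy(3)]) (use xy thecode_sub p7 in auto)
    ultimately show False by simp
  qed
  have "card thecode = card (drop 10 ` thecode)" using card_image[OF inj] by simp
  also have "\<dots> \<le> card (vecs p (3 * p - 10))"
    by (rule card_mono[OF finite_vecs]) (use thecode_sub drop_vecs in blast)
  also have "\<dots> = p ^ (3 * p - 10)" by (rule card_vecs)
  finally show "card thecode \<le> p ^ (3 * p - 10)" .
next
  have lenLL: "length LL = 10" by (simp add: LL_def)
  have "p ^ (3 * p) \<le> card thecode * p ^ (length LL)"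
    using count_ge[of LL] unfolding thecode_def .
  then have "p ^ (3 * p) \<le> card thecode * p ^ 10" unfolding lenLL .
  moreover have "p ^ (3 * p) = p ^ (3 * p - 10) * p ^ 10"
    using p7 by (simp add: power_add[symmetric])
  ultimately have "p ^ (3 * p - 10) * p ^ 10 \<le> card thecode * p ^ 10" by simp
  moreover have "0 < p ^ 10" using p0 by simp
  ultimately show "p ^ (3 * p - 10) \<le> card thecode" by simp
qed

lemma exists12: "\<exists>x\<in>thecode. \<exists>y\<in>thecode. x \<noteq> y \<and> pair_dist x y \<le> 12"
proof -
  have "\<not> inj_on (drop 11) thecode"
  proof
    assume inj: "inj_on (drop 11) thecode"
    have "card thecode = card (drop 11 ` thecode)" using card_image[OF inj] by simp
    also have "\<dots> \<le> card (vecs p (3 * p - 11))"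
      by (rule card_mono[OF finite_vecs]) (use thecode_sub drop_vecs in blast)
    also have "\<dots> = p ^ (3 * p - 11)" by (rule card_vecs)
    finally have "p ^ (3 * p - 10) \<le> p ^ (3 * p - 11)" using thecode_card by simp
    moreover have "p ^ (3 * p - 11) < p ^ (3 * p - 10)"
      by (rule power_strict_increasing) (use p7 in auto)
    ultimately show False by simp
  qed
  then obtain x y where xy: "x \<in> thecode" "y \<in> thecode" "drop 11 x = drop 11 y" "x \<noteq> y"
    unfolding inj_on_def by blast
  have "pair_dist x y \<le> 11 + 1"
    by (rule pd_window[OF _ _ xy(3)]) (use xy thecode_sub p7 in auto)
  then show ?thesis using xy by auto
qed

lemma thecode_min: "min_pair_dist thecode = 12"
proof -
  define S where "S = {pair_dist x y | x y. x \<in> thecode \<and> y \<in> thecode \<and> x \<noteq> y}"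
  have fS: "finite S"
  proof -
    have "S \<subseteq> (\<lambda>(x, y). pair_dist x y) ` (thecode \<times> thecode)" unfolding S_def by auto
    then show ?thesis using thecode_fin finite_subset by blast
  qed
  have lb: "\<And>s. s \<in> S \<Longrightarrow> 12 \<le> s" unfolding S_def using dist12 by blast
  obtain x y where xy: "x \<in> thecode" "y \<in> thecode" "x \<noteq> y" "pair_dist x y \<le> 12" using exists12 by blast
  have "pair_dist x y \<in> S" unfolding S_def using xy by blast
  moreover then have "pair_dist x y = 12" using lb xy(4) by fastforce
  ultimately have "12 \<in> S" by simp
  then have "Min S = 12" using fS lb by (intro Min_eqI) auto
  then show ?thesis unfolding min_pair_dist_def S_def .
qed

end

lemma omega_exists:
  assumes pr: "prime p" and p1: "p mod 3 = 1"
  shows "\<exists>w::int. int p dvd w^2 + w + 1"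
proof -
  have p7: "7 \<le> p"
  proof -
    have n4: "\<not> prime (4::nat)"
    proof
      assume "prime (4::nat)"
      then have "\<forall>m. m dvd 4 \<longrightarrow> m = 1 \<or> m = (4::nat)" by (simp add: prime_nat_iff)
      moreover have "(2::nat) dvd 4" by simp
      ultimately have "(2::nat) = 1 \<or> (2::nat) = 4" by blast
      then show False by simp
    qed
    have "p \<noteq> 1" "p \<noteq> 4" using pr n4 by auto
    with p1 show ?thesis by presburger
  qed
  obtain g where g: "residue_primroot p g" using prime_primitive_root_exists[of p] pr prime_gt_1_nat[of p] by auto
  have ordg: "ord p g = p - 1" using g pr by (simp add: residue_primroot_def totient_prime)
  define k where "k = (p - 1) div 3"
  have k3: "3 * k = p - 1" using p1 k_def by presburger
  have kpos: "0 < k" "k < p - 1" using k3 p7 by auto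
  have c1: "[g ^ (p - 1) = 1] (mod p)" using ord_works[of g p] ordg by simp
  have c2: "\<not> [g ^ k = 1] (mod p)" using ord_minimal[of k p g] kpos ordg by simp
  define w where "w = int (g ^ k)"
  have "[int (g ^ (p - 1)) = int 1] (mod int p)" by (subst cong_int_iff) (rule c1)
  then have d1: "int p dvd w^3 - 1" unfolding w_def using k3
    by (simp add: cong_iff_dvd_diff power_mult[symmetric] mult.commute of_nat_power)
  have d2: "\<not> int p dvd w - 1"
  proof
    assume h: "int p dvd w - 1"
    have "[int (g ^ k) = int 1] (mod int p)" unfolding cong_iff_dvd_diff using h unfolding w_def by simp
    then have "[g ^ k = 1] (mod p)" by (subst (asm) cong_int_iff)
    with c2 show False by simp
  qed
  have "w^3 - 1 = (w - 1) * (w^2 + w + 1)" by (simp add: algebra_simps power2_eq_square power3_eq_cube)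
  then have "int p dvd (w - 1) * (w^2 + w + 1)" using d1 by simp
  then have "int p dvd w^2 + w + 1" using d2 prime_dvd_mult_iff[of "int p"] pr by simp
  then show ?thesis by blast
qed




theorem theorem2:
  fixes p :: nat
  assumes "prime p" and "odd p" and "3 dvd (p - 1)"
  shows "\<exists>C. C \<subseteq> vecs p (3 * p) \<and> min_pair_dist C = 12 \<and> card C = p ^ (3 * p - 12 + 2)"
proof -
  have p2: "2 \<le> p" using prime_ge_2_nat[OF assms(1)] .
  have p1: "p mod 3 = 1" using assms(3) p2 by presburger
  have p7: "7 \<le> p" using p1 assms(2) p2 by presburger
  obtain w where w: "int p dvd w^2 + w + 1" using omega_exists[OF assms(1) p1] by blast
  interpret cf3 p w by unfold_locales (use assms(1) p7 w p1 in auto)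
  have e: "3 * p - 12 + 2 = 3 * p - 10" using p7 by simp
  show ?thesis using thecode_sub thecode_min thecode_card unfolding e by blast
qed



end
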